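(* (a) If $x=u(\tau)$ and $y=u(2\tau)$, then $x^4(y^4+1)=2y^2$. (b) If $x=v(\tau)$ and $y=v(2\tau)$, then $x^2y+x^2+y^2=y$. These hold for all $\tau$ in the upper half-plane.
   Context: For $\tau$ in the upper half-plane, $q=e^{2\pi i\tau}$ and $q^r:=e^{2\pi i r\tau}$. Define $u(\tau)=\sqrt{2}\,q^{1/8}\prod_{n\ge1}(1+q^n)^{(-1)^n}$ and $v(\tau)=q^{1/2}\prod_{n\ge1}(1-q^n)^{\left(\frac{8}{n}\right)}$, where $\left(\frac{8}{n}\right)$ is the Kronecker symbol ($0$ for $n$ even, $1$ for $n\equiv\pm1\pmod 8$, $-1$ for $n\equiv\pm3\pmod8$). *)

theory Defs
  imports "HOL-Analysis.Analysis"
begin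

text \<open>Fractional power of the nome: q^r = exp(2 pi i r tau).\<close>
definition qpow :: "real \<Rightarrow> complex \<Rightarrow> complex" where
  "qpow r \<tau> = exp (2 * complex_of_real pi * \<i> * complex_of_real r * \<tau>)"

definition kron8 :: "nat \<Rightarrow> int" where
  "kron8 n = (if even n then 0
              else if n mod 8 = 1 \<or> n mod 8 = 7 then 1 else -1)"

definition u_fun :: "complex \<Rightarrow> complex" where
  "u_fun \<tau> = complex_of_real (sqrt 2) * qpow (1/8) \<tau> *
     (\<Prod>n. (1 + qpow 1 \<tau> ^ (n+1)) powi ((-1) ^ (n+1)))"

definition v_fun :: "complex \<Rightarrow> complex" where
  "v_fun \<tau> = qpow (1/2) \<tau> *
     (\<Prod>n. (1 - qpow 1 \<tau> ^ (n+1)) powi (kron8 (n+1)))"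

end

theory Submission
  imports Defs "HOL-Complex_Analysis.Complex_Analysis"
begin

definition tri :: "int \<Rightarrow> nat" where "tri n = nat (n*(n-1) div 2)"

definition Sth :: "complex \<Rightarrow> complex \<Rightarrow> complex" where
  "Sth z Q = (\<Sum>\<^sub>\<infinity> n::int. z powi n * Q ^ tri n)"

definition Pw :: "complex \<Rightarrow> complex \<Rightarrow> complex" where
  "Pw Q w = (\<Sum>k. Q ^ (k*(k-1) div 2) * w ^ k)"

lemma tri_Suc_nat: "(Suc k * (Suc k - 1)) div 2 = k*(k-1) div 2 + k"
proof -
  have "Suc k * k = k*(k-1) + 2*k" by (cases k) (auto simp: algebra_simps)
  moreover have "even (k*(k-1))" by auto
  ultimately show ?thesis by auto
qed

lemma summable_tri:
  fixes Q w :: complex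
  assumes "norm Q < 1"
  shows "summable (\<lambda>k. norm (Q ^ (k*(k-1) div 2) * w ^ k))"
proof -
  have "(\<lambda>k. norm Q ^ k * norm w) \<longlonglongrightarrow> 0 * norm w"
    by (intro tendsto_mult tendsto_const LIMSEQ_power_zero) (use assms in auto)
  then have "eventually (\<lambda>k. norm Q ^ k * norm w < 1/2) sequentially"
    by (intro order_tendstoD) auto
  then obtain N where N: "\<And>k. k \<ge> N \<Longrightarrow> norm Q ^ k * norm w < 1/2"
    by (auto simp: eventually_sequentially)
  show ?thesis
  proof (rule summable_ratio_test[where c="1/2" and N=N])
    fix n assume "n \<ge> N"
    have "norm (norm (Q ^ (Suc n * (Suc n - 1) div 2) * w ^ Suc n))
        = (norm Q ^ n * norm w) * (norm Q ^ (n*(n-1) div 2) * norm w ^ n)"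
    proof -
      have "Q ^ (Suc n * (Suc n - 1) div 2) = Q ^ n * Q ^ (n*(n-1) div 2)"
        by (simp only: tri_Suc_nat power_add mult.commute)
      then show ?thesis by (simp add: norm_mult norm_power algebra_simps)
    qed
    also have "\<dots> \<le> 1/2 * (norm Q ^ (n*(n-1) div 2) * norm w ^ n)"
      using N[OF \<open>n \<ge> N\<close>] by (intro mult_right_mono) auto
    finally show "norm (norm (Q ^ (Suc n * (Suc n - 1) div 2) * w ^ Suc n))
          \<le> 1/2 * norm (norm (Q ^ (n * (n - 1) div 2) * w ^ n))"
      by (simp add: norm_mult norm_power)
  qed simp
qed

lemma int_split_has_sum:
  fixes f :: "int \<Rightarrow> 'a::banach"
  assumes s1: "summable (\<lambda>k. norm (f (int k)))"
      and s2: "summable (\<lambda>k. norm (f (- int k - 1)))"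
  shows "(f has_sum ((\<Sum>k. f (int k)) + (\<Sum>k. f (- int k - 1)))) UNIV"
proof -
  have h1: "((\<lambda>k. f (int k)) has_sum (\<Sum>k. f (int k))) UNIV"
    using s1 by (intro norm_summable_imp_has_sum summable_sums) (auto intro: summable_norm_cancel)
  have h2: "((\<lambda>k. f (- int k - 1)) has_sum (\<Sum>k. f (- int k - 1))) UNIV"
    using s2 by (intro norm_summable_imp_has_sum summable_sums) (auto intro: summable_norm_cancel)
  have b1: "bij_betw int UNIV {n. n \<ge> 0}"
    by (rule bij_betwI[where g=nat]) auto
  have b2: "bij_betw (\<lambda>k. - int k - 1) UNIV {n. n < 0}"
    by (rule bij_betwI[where g="\<lambda>n. nat (- n - 1)"]) auto
  have "(f has_sum (\<Sum>k. f (int k))) {n. n \<ge> 0}"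
    using has_sum_reindex_bij_betw[OF b1, of f] h1 by simp
  moreover have "(f has_sum (\<Sum>k. f (- int k - 1))) {n. n < 0}"
    using has_sum_reindex_bij_betw[OF b2, of f] h2 by simp
  ultimately have "(f has_sum ((\<Sum>k. f (int k)) + (\<Sum>k. f (- int k - 1)))) ({n. n \<ge> 0} \<union> {n. n < 0})"
    by (intro has_sum_Un_disjoint) auto
  moreover have "{n::int. n \<ge> 0} \<union> {n. n < 0} = UNIV" by auto
  ultimately show ?thesis by simp
qed

lemma int_split_abs_summable:
  fixes f :: "int \<Rightarrow> 'a::banach"
  assumes s1: "summable (\<lambda>k. norm (f (int k)))"
      and s2: "summable (\<lambda>k. norm (f (- int k - 1)))"
  shows "(\<lambda>n. norm (f n)) summable_on UNIV"
  using int_split_has_sum[of "\<lambda>n. norm (f n)"] s1 s2 by (auto simp: summable_on_def)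

lemma tri_nat: "tri (int k) = k*(k-1) div 2"
proof (cases k)
  case (Suc m)
  have "int (Suc m) * (int (Suc m) - 1) = int (Suc m * m)" by (simp add: algebra_simps)
  then show ?thesis using Suc by (simp add: tri_def zdiv_int del: of_nat_mult)
qed (simp add: tri_def)

lemma tri_neg: "tri (- int k - 1) = k*(k-1) div 2 + 2*k + 1"
proof -
  have e: "(- int k - 1) * (- int k - 1 - 1) = int (k*(k-1)) + 2*(2*int k + 1)"
    by (cases k) (auto simp: algebra_simps)
  have "even (k*(k-1))" by auto
  then obtain m where m: "k*(k-1) = 2*m" by blast
  have "tri (- int k - 1) = nat ((int (2*m) + 2*(2*int k + 1)) div 2)"
    unfolding tri_def e m by simp
  also have "\<dots> = m + 2*k + 1" by simp
  finally show ?thesis using m by simp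
qed

lemma Sth_terms:
  fixes z Q :: complex
  assumes "z \<noteq> 0"
  shows "z powi (int k) * Q ^ tri (int k) = Q ^ (k*(k-1) div 2) * z ^ k"
    and "z powi (- int k - 1) * Q ^ tri (- int k - 1) = (Q/z) * (Q ^ (k*(k-1) div 2) * (Q^2/z) ^ k)"
proof -
  show "z powi (int k) * Q ^ tri (int k) = Q ^ (k*(k-1) div 2) * z ^ k"
    by (simp add: tri_nat)
  have "z powi (- int k - 1) = inverse z ^ Suc k"
    by (simp add: power_int_diff power_int_minus assms field_simps)
  then show "z powi (- int k - 1) * Q ^ tri (- int k - 1) = (Q/z) * (Q ^ (k*(k-1) div 2) * (Q^2/z) ^ k)"
    by (simp add: tri_neg power_add power_mult_distrib power_divide field_simps power_mult[symmetric])
qed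

lemma Sth_has_sum:
  fixes z Q :: complex
  assumes Q: "norm Q < 1" and z: "z \<noteq> 0"
  shows "((\<lambda>n. z powi n * Q ^ tri n) has_sum (Pw Q z + (Q/z) * Pw Q (Q^2/z))) UNIV"
    and "(\<lambda>n. norm (z powi n * Q ^ tri n)) summable_on UNIV"
proof -
  have s1: "summable (\<lambda>k. norm (z powi (int k) * Q ^ tri (int k)))"
    unfolding Sth_terms(1)[OF z] by (rule summable_tri[OF Q])
  have s2: "summable (\<lambda>k. norm (z powi (- int k - 1) * Q ^ tri (- int k - 1)))"
    unfolding Sth_terms(2)[OF z] norm_mult
    by (intro summable_mult) (rule summable_tri[OF Q, unfolded norm_mult])
  have e1: "(\<Sum>k. z powi (int k) * Q ^ tri (int k)) = Pw Q z"
    unfolding Sth_terms(1)[OF z] Pw_def ..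
  have e2: "(\<Sum>k. z powi (- int k - 1) * Q ^ tri (- int k - 1)) = (Q/z) * Pw Q (Q^2/z)"
    unfolding Sth_terms(2)[OF z] Pw_def
    by (rule suminf_mult) (rule summable_norm_cancel[OF summable_tri[OF Q]])
  show "((\<lambda>n. z powi n * Q ^ tri n) has_sum (Pw Q z + (Q/z) * Pw Q (Q^2/z))) UNIV"
    using int_split_has_sum[OF s1 s2] unfolding e1 e2 .
  show "(\<lambda>n. norm (z powi n * Q ^ tri n)) summable_on UNIV"
    by (rule int_split_abs_summable[OF s1 s2])
qed

lemma Sth_eq: "norm Q < 1 \<Longrightarrow> z \<noteq> 0 \<Longrightarrow> Sth z Q = Pw Q z + (Q/z) * Pw Q (Q^2/z)"
  unfolding Sth_def by (rule infsumI) (rule Sth_has_sum)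

lemma Sth_summable: "norm (Q::complex) < 1 \<Longrightarrow> (z::complex) \<noteq> 0 \<Longrightarrow> (\<lambda>n. z powi n * Q ^ tri n) summable_on UNIV"
  using Sth_has_sum(1)[of Q z] by (auto simp: summable_on_def)


lemma Pw_holo_UNIV:
  assumes Q: "norm Q < 1"
  shows "Pw Q holomorphic_on UNIV"
proof -
  have hb: "Pw Q holomorphic_on ball 0 R" for R
  proof (rule power_series_holomorphic[where a = "\<lambda>k. Q^(k*(k-1) div 2)"])
    fix w :: complex
    have "(\<lambda>n. Q^(n*(n-1) div 2) * w^n) sums Pw Q w"
      unfolding Pw_def by (rule summable_sums, rule summable_norm_cancel[OF summable_tri[OF Q]])
    then show "(\<lambda>n. Q^(n*(n-1) div 2) * (w-0)^n) sums Pw Q w" by simp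
  qed
  have "Pw Q field_differentiable (at w)" for w
    using hb[of "norm w + 1"] by (rule holomorphic_on_imp_differentiable_at) auto
  then show ?thesis
    by (auto simp: holomorphic_on_def intro: field_differentiable_at_within)
qed

lemma Pw_holo [holomorphic_intros]:
  assumes Q: "norm Q < 1" and f: "f holomorphic_on A"
  shows "(\<lambda>z. Pw Q (f z)) holomorphic_on A"
proof -
  have "(Pw Q \<circ> f) holomorphic_on A"
    by (rule holomorphic_on_compose[OF f]) (rule holomorphic_on_subset[OF Pw_holo_UNIV[OF Q]], auto)
  then show ?thesis by (simp add: o_def)
qed

lemma Sth_holo:
  assumes Q: "norm Q < 1"
  shows "(\<lambda>z. Sth z Q) holomorphic_on (- {0})"
proof -
  have "(\<lambda>z. Pw Q z + (Q/z) * Pw Q (Q^2/z)) holomorphic_on (- {0})"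
    using Q by (intro holomorphic_intros) auto
  then show ?thesis
    by (rule holomorphic_transform) (use Sth_eq[OF Q] in auto)
qed

lemma tri_powi: "(Q::complex) ^ tri n = Q powi (n*(n-1) div 2)"
proof -
  have "n*(n-1) \<ge> 0" by (cases "n \<ge> 1") (auto simp: mult_nonpos_nonpos zero_le_mult_iff)
  then have "n*(n-1) div 2 \<ge> 0" by simp
  then show ?thesis by (simp add: tri_def power_int_def)
qed

lemma tri_1_minus: "tri (1 - n) = tri n"
  unfolding tri_def by (simp add: algebra_simps)


lemma minus_one_powi_sq: "((-1::complex) powi n) * ((-1) powi n) = 1"
proof -
  have "((-1::complex) powi n) * ((-1) powi n) = ((-1) * (-1)) powi n"
    by (simp add: power_int_mult_distrib)
  then show ?thesis by simp
qed

lemma Sth_minus1: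
  assumes Q: "norm Q < 1"
  shows "Sth (-1) Q = 0"
proof -
  have b: "bij_betw (\<lambda>n::int. 1 - n) UNIV UNIV"
    by (rule bij_betwI[where g="\<lambda>n. 1 - n"]) auto
  have t: "(-1::complex) powi (1 - n) * Q ^ tri (1 - n) = - ((-1) powi n * Q ^ tri n)" for n
  proof -
    have "(-1::complex) powi (1 - n) = (-1) / (-1) powi n"
      by (simp add: power_int_diff)
    also have "\<dots> = - ((-1) powi n)"
      using minus_one_powi_sq[of n] by (auto simp: field_simps)
    finally show ?thesis by (simp add: tri_1_minus)
  qed
  have "Sth (-1) Q = (\<Sum>\<^sub>\<infinity>n. (-1::complex) powi (1 - n) * Q ^ tri (1 - n))"
    unfolding Sth_def by (rule infsum_reindex_bij_betw[OF b, symmetric])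
  also have "\<dots> = - Sth (-1) Q"
    unfolding t infsum_uminus Sth_def ..
  finally show ?thesis by simp
qed

lemma Sth_shift:
  assumes Q: "norm Q < 1" "Q \<noteq> 0" and z: "z \<noteq> 0"
  shows "Sth (Q * z) Q = Sth z Q / z"
proof -
  have b: "bij_betw (\<lambda>n::int. n + 1) UNIV UNIV"
    by (rule bij_betwI[where g="\<lambda>n. n - 1"]) auto
  have t: "(Q*z) powi n * Q ^ tri n = z powi n * Q ^ tri (n + 1)" for n
  proof -
    have e: "(n + 1) * (n + 1 - 1) div 2 = n + n*(n-1) div 2"
    proof -
      have "(n + 1) * (n + 1 - 1) = n*(n-1) + 2*n" by (simp add: algebra_simps)
      then show ?thesis by simp
    qed
    have "(Q*z) powi n * Q ^ tri n = z powi n * (Q powi n * Q powi (n*(n-1) div 2))"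
      by (simp add: tri_powi power_int_mult_distrib)
    also have "\<dots> = z powi n * Q powi (n + n*(n-1) div 2)"
      using Q by (simp add: power_int_add)
    also have "\<dots> = z powi n * Q ^ tri (n + 1)"
      unfolding tri_powi e ..
    finally show ?thesis .
  qed
  have t2: "z powi (m - 1) * Q ^ tri m = (z powi m * Q ^ tri m) / z" for m
    using z by (simp add: power_int_diff)
  have "Sth (Q * z) Q = (\<Sum>\<^sub>\<infinity>n. z powi n * Q ^ tri (n + 1))"
    unfolding Sth_def t ..
  also have "\<dots> = (\<Sum>\<^sub>\<infinity>m. z powi (m - 1) * Q ^ tri m)"
    using infsum_reindex_bij_betw[OF b, of "\<lambda>m. z powi (m - 1) * Q ^ tri m"] by simp
  also have "\<dots> = (\<Sum>\<^sub>\<infinity>m. z powi m * Q ^ tri m) / z"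
    unfolding t2 divide_inverse by (rule infsum_cmult_left')
  finally show ?thesis by (simp add: Sth_def)
qed


lemma conv_prod_geom:
  fixes Q c :: complex
  assumes "norm Q < 1"
  shows "convergent_prod (\<lambda>n. 1 + c * Q ^ n)"
proof -
  have "summable (\<lambda>n. norm (c * Q ^ n))"
    using assms by (auto simp: norm_mult norm_power intro!: summable_mult summable_geometric)
  then have "abs_convergent_prod (\<lambda>n. 1 + c * Q ^ n)"
    by (intro summable_imp_abs_convergent_prod) simp
  then show ?thesis by (rule abs_convergent_prod_imp_convergent_prod)
qed

lemma prod_geom_nonzero:
  fixes Q c :: complex
  assumes "norm Q < 1" "\<And>n. 1 + c * Q ^ n \<noteq> 0"
  shows "(\<Prod>n. 1 + c * Q ^ n) \<noteq> 0"
  by (rule prodinf_nonzero[OF conv_prod_geom]) (use assms in auto)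

lemma prod_geom_holo:
  fixes Q c :: complex
  assumes Q: "norm Q < 1"
  shows "(\<lambda>w. \<Prod>n. 1 + (c * w) * Q ^ n) holomorphic_on UNIV"
proof -
  define P where "P = (\<lambda>N w. \<Prod>n<N. 1 + (c * w) * Q ^ n)"
  have uc: "uniformly_convergent_on (cball 0 R) P" if R: "R > 0" for R
    unfolding P_def
  proof (rule uniformly_convergent_on_prod')
    have "uniform_limit (cball 0 R) (\<lambda>N w. \<Sum>n<N. norm (1 + (c * w) * Q ^ n - 1))
            (\<lambda>w. \<Sum>n. norm (1 + (c * w) * Q ^ n - 1)) sequentially"
    proof (rule Weierstrass_m_test_ev[where M = "\<lambda>n. norm c * R * norm Q ^ n"])
      show "\<forall>\<^sub>F n in sequentially. \<forall>w\<in>cball 0 R. norm (norm (1 + c * w * Q ^ n - 1)) \<le> norm c * R * norm Q ^ n"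
        by (intro always_eventually ballI)
           (auto simp: norm_mult norm_power intro!: mult_left_mono mult_right_mono)
      show "summable (\<lambda>n. norm c * R * norm Q ^ n)"
        using Q by (intro summable_mult summable_geometric) auto
    qed
    then show "uniformly_convergent_on (cball 0 R) (\<lambda>N w. \<Sum>n<N. norm (1 + (c * w) * Q ^ n - 1))"
      by (auto simp: uniformly_convergent_on_def)
  qed (auto intro!: continuous_intros)
  have ul: "uniform_limit (cball 0 R) P (\<lambda>w. \<Prod>n. 1 + (c * w) * Q ^ n) sequentially" if R: "R > 0" for R
  proof -
    obtain g where g: "uniform_limit (cball 0 R) P g sequentially"
      using uc[OF R] by (auto simp: uniformly_convergent_on_def)
    also have "?this \<longleftrightarrow> uniform_limit (cball 0 R) P (\<lambda>w. \<Prod>n. 1 + (c * w) * Q ^ n) sequentially"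
    proof (intro uniform_limit_cong)
      fix w :: complex assume "w \<in> cball 0 R"
      with g have "(\<lambda>n. P (Suc n) w) \<longlonglongrightarrow> g w"
        by (metis tendsto_uniform_limitI filterlim_sequentially_Suc)
      moreover have "(\<lambda>n. P (Suc n) w) \<longlonglongrightarrow> (\<Prod>n. 1 + (c * w) * Q ^ n)"
        using convergent_prod_LIMSEQ[OF conv_prod_geom[OF Q, of "c * w"]]
        unfolding P_def lessThan_Suc_atMost .
      ultimately show "g w = (\<Prod>n. 1 + (c * w) * Q ^ n)"
        using tendsto_unique by force
    qed auto
    finally show ?thesis .
  qed
  show ?thesis
  proof (rule holomorphic_uniform_sequence[where f = P])
    fix n show "P n holomorphic_on UNIV" unfolding P_def by (intro holomorphic_intros)
  next
    fix z :: complex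
    have "uniform_limit (cball 0 (norm z + 1)) P (\<lambda>w. \<Prod>n. 1 + (c * w) * Q ^ n) sequentially"
      by (rule ul) (auto intro: add_nonneg_pos)
    hence "uniform_limit (cball z 1) P (\<lambda>w. \<Prod>n. 1 + (c * w) * Q ^ n) sequentially"
      by (rule uniform_limit_on_subset) (simp add: cball_subset_cball_iff)
    thus "\<exists>d>0. cball z d \<subseteq> UNIV \<and> uniform_limit (cball z d) P (\<lambda>w. \<Prod>n. 1 + (c * w) * Q ^ n) sequentially"
      by (intro exI[of _ 1]) auto
  qed auto
qed

lemma prod_geom_holo' [holomorphic_intros]:
  fixes Q c :: complex
  assumes Q: "norm Q < 1" and f: "f holomorphic_on A"
  shows "(\<lambda>z. \<Prod>n. 1 + (c * f z) * Q ^ n) holomorphic_on A"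
proof -
  have "((\<lambda>w. \<Prod>n. 1 + (c * w) * Q ^ n) \<circ> f) holomorphic_on A"
    by (rule holomorphic_on_compose[OF f]) (rule holomorphic_on_subset[OF prod_geom_holo[OF Q]], auto)
  then show ?thesis by (simp add: o_def)
qed

definition Jp :: "complex \<Rightarrow> complex \<Rightarrow> complex" where
  "Jp z Q = (\<Prod>n. 1 + z * Q ^ n) * (\<Prod>n. 1 + (Q / z) * Q ^ n)"

lemma Jp_holo:
  assumes Q: "norm Q < 1"
  shows "(\<lambda>z. Jp z Q) holomorphic_on (- {0})"
proof -
  have "(\<lambda>z. (\<Prod>n. 1 + (1 * z) * Q ^ n) * (\<Prod>n. 1 + (Q * (1/z)) * Q ^ n)) holomorphic_on (- {0})"
    using Q by (intro holomorphic_intros) auto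
  then show ?thesis unfolding Jp_def by simp
qed

lemma prod_geom_head:
  fixes Q c :: complex
  assumes Q: "norm Q < 1" and c: "c \<noteq> -1"
  shows "(\<Prod>n. 1 + c * Q ^ n) = (1 + c) * (\<Prod>n. 1 + (c * Q) * Q ^ n)"
proof -
  have "(\<Prod>n. 1 + c * Q ^ n) = (\<Prod>n. 1 + c * Q ^ (Suc n)) * (1 + c)"
    using prodinf_split_initial_segment[OF conv_prod_geom[OF Q, of c], of 1] c
    by (auto simp: add_eq_0_iff)
  then show ?thesis by (simp add: algebra_simps)
qed

lemma prod_geom_head':
  fixes Q c :: complex
  assumes Q: "norm Q < 1"
  shows "(\<Prod>n. 1 + c * Q ^ n) = (1 + c) * (\<Prod>n. 1 + (c * Q) * Q ^ n)"
proof (cases "c = -1")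
  case True
  have "(\<Prod>n. 1 + c * Q ^ n) = 0"
  proof -
    have "(\<lambda>n. 1 + c * Q ^ n) has_prod (\<Prod>n. 1 + c * Q ^ n)"
      by (rule convergent_prod_has_prod[OF conv_prod_geom[OF Q]])
    moreover have "0 \<in> range (\<lambda>n. 1 + c * Q ^ n)"
      using True by (auto intro!: image_eqI[of _ _ 0])
    ultimately show ?thesis using has_prod_eq_0_iff by blast
  qed
  then show ?thesis using True by simp
qed (rule prod_geom_head[OF Q])

lemma Jp_shift:
  assumes Q: "norm Q < 1" "Q \<noteq> 0" and z: "z \<noteq> 0"
  shows "Jp (Q * z) Q = Jp z Q / z"
proof -
  define A where "A = (\<Prod>n. 1 + (z * Q) * Q ^ n)"
  define B where "B = (\<Prod>n. 1 + (Q / z) * Q ^ n)"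
  have "Jp z Q = (1 + z) * A * B"
    unfolding Jp_def A_def B_def by (subst prod_geom_head'[OF Q(1)]) simp
  moreover have "Jp (Q * z) Q = A * ((1 + 1/z) * B)"
    unfolding Jp_def A_def B_def
    by (subst prod_geom_head'[OF Q(1), of "Q / (Q * z)"]) (use Q z in \<open>simp add: field_simps\<close>)
  ultimately show ?thesis using z by (simp add: field_simps)
qed

lemma Jp_zero1: "norm Q < 1 \<Longrightarrow> Jp (-1) Q = 0"
  unfolding Jp_def by (subst prod_geom_head') auto

lemma Jp_zero2: "norm Q < 1 \<Longrightarrow> Q \<noteq> 0 \<Longrightarrow> Jp (-Q) Q = 0"
  unfolding Jp_def by (subst (2) prod_geom_head') auto


lemma jtp_const:
  fixes Q :: complex
  assumes Q: "norm Q < 1" and Q0: "Q \<noteq> 0"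
  shows "\<exists>c. \<forall>z. norm Q ^ 2 < norm z \<and> norm z < 1 / norm Q \<longrightarrow> Sth z Q = c * Jp z Q"
proof -
  define U where "U = {z::complex. norm Q ^ 2 < norm z \<and> norm z < 1 / norm Q}"
  have nQ: "0 < norm Q" using Q0 by simp
  have U0: "z \<in> U \<Longrightarrow> z \<noteq> 0" for z
    unfolding U_def by (auto simp: nQ)
  have openU: "open U"
    unfolding U_def by (intro open_Collect_conj open_Collect_less continuous_intros)
  have connU: "connected U"
    using connected_annulus(1)[of "norm Q ^ 2" "0::complex" "1 / norm Q"] unfolding U_def by simp
  define S where "S = (\<lambda>z. Sth z Q)"
  have Sholo: "S holomorphic_on (- {0})" unfolding S_def by (rule Sth_holo[OF Q])
  have Sm1: "S (-1) = 0" unfolding S_def by (rule Sth_minus1[OF Q])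
  have SmQ: "S (-Q) = 0"
    using Sth_shift[OF Q Q0, of "-1"] Sm1 unfolding S_def by simp
  define S1 where "S1 = (\<lambda>z. if z = -1 then deriv S (-1) else (S z - S (-1)) / (z - (-1)))"
  have S1holo: "S1 holomorphic_on (- {0})"
    unfolding S1_def by (rule pole_lemma_open[OF Sholo]) auto
  have S1mQ: "S1 (-Q) = 0"
  proof (cases "Q = 1")
    case True then show ?thesis using Q by simp
  next
    case False then show ?thesis unfolding S1_def using SmQ Sm1 by auto
  qed
  define S2 where "S2 = (\<lambda>z. if z = -Q then deriv S1 (-Q) else (S1 z - S1 (-Q)) / (z - (-Q)))"
  have S2holo: "S2 holomorphic_on (- {0})"
    unfolding S2_def by (rule pole_lemma_open[OF S1holo]) auto
  have Sfac: "S z = (z + 1) * (z + Q) * S2 z" if "z \<noteq> 0" for z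
  proof -
    have "S z = (z + 1) * S1 z"
    proof (cases "z = -1")
      case False
      then have "1 + z \<noteq> 0" "z + 1 \<noteq> 0" by (auto simp: add_eq_0_iff minus_equation_iff)
      then show ?thesis unfolding S1_def using Sm1 False by (auto simp: field_simps)
    qed (simp add: Sm1)
    moreover have "S1 z = (z + Q) * S2 z"
    proof (cases "z = -Q")
      case False
      then have "Q + z \<noteq> 0" "z + Q \<noteq> 0" by (auto simp: add_eq_0_iff minus_equation_iff)
      then show ?thesis unfolding S2_def using S1mQ False by (auto simp: field_simps)
    qed (simp add: S1mQ)
    ultimately show ?thesis by simp
  qed
  define J2 where "J2 = (\<lambda>z. (\<Prod>n. 1 + (Q * z) * Q ^ n) * (\<Prod>n. 1 + (Q * Q * (1 / z)) * Q ^ n))"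
  have J2holo: "J2 holomorphic_on (- {0})"
    unfolding J2_def using Q by (intro holomorphic_intros) auto
  have Jfac: "Jp z Q = (z + 1) * (z + Q) / z * J2 z" if "z \<noteq> 0" for z
  proof -
    have "Jp z Q = ((1 + z) * (\<Prod>n. 1 + (z * Q) * Q ^ n)) * ((1 + Q / z) * (\<Prod>n. 1 + (Q / z * Q) * Q ^ n))"
      unfolding Jp_def by (subst (1 2) prod_geom_head'[OF Q]) simp
    then show ?thesis unfolding J2_def using that by (simp add: field_simps)
  qed
  have J2nz: "J2 z \<noteq> 0" if "z \<in> U" for z
  proof -
    have z: "norm Q ^ 2 < norm z" "norm z < 1 / norm Q" using that unfolding U_def by auto
    have a: "1 + (Q * z) * Q ^ n \<noteq> 0" for n
    proof
      assume "1 + (Q * z) * Q ^ n = 0"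
      then have "norm ((Q * z) * Q ^ n) = 1" by (metis add_eq_0_iff norm_minus_cancel norm_one)
      moreover have "norm ((Q * z) * Q ^ n) < 1"
      proof -
        have "norm ((Q * z) * Q ^ n) = (norm Q * norm z) * norm Q ^ n" by (simp add: norm_mult norm_power)
        also have "\<dots> \<le> norm Q * norm z" using Q by (intro mult_left_le) (auto intro: power_le_one)
        also have "\<dots> < 1" using z(2) nQ by (simp add: field_simps)
        finally show ?thesis .
      qed
      ultimately show False by simp
    qed
    have b: "1 + (Q * Q * (1 / z)) * Q ^ n \<noteq> 0" for n
    proof
      assume "1 + (Q * Q * (1 / z)) * Q ^ n = 0"
      then have "norm ((Q * Q * (1 / z)) * Q ^ n) = 1" by (metis add_eq_0_iff norm_minus_cancel norm_one)
      moreover have "norm ((Q * Q * (1 / z)) * Q ^ n) < 1"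
      proof -
        have "norm ((Q * Q * (1 / z)) * Q ^ n) = (norm Q ^ 2 / norm z) * norm Q ^ n"
          by (simp add: norm_mult norm_power norm_divide power2_eq_square)
        also have "\<dots> \<le> norm Q ^ 2 / norm z" using Q by (intro mult_left_le) (auto intro: power_le_one)
        also have "\<dots> < 1"
        proof -
          have zp: "0 < norm z" using z(1) zero_le_power2[of "norm Q"] by linarith
          then show ?thesis using z(1) by (simp add: divide_less_eq_1_pos)
        qed
        finally show ?thesis .
      qed
      ultimately show False by simp
    qed
    show ?thesis unfolding J2_def
      using prod_geom_nonzero[OF Q, of "Q * z"] prod_geom_nonzero[OF Q, of "Q * Q * (1 / z)"] a b by auto
  qed
  define h where "h = (\<lambda>z. z * S2 z / J2 z)"
  have hholo: "h holomorphic_on U"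
    unfolding h_def
    by (intro holomorphic_intros holomorphic_on_subset[OF S2holo] holomorphic_on_subset[OF J2holo])
       (use U0 J2nz in auto)
  have hS: "h z = S z / Jp z Q" if "z \<in> U" "z \<noteq> -1" "z \<noteq> -Q" for z
  proof -
    have z0: "z \<noteq> 0" using U0 that by auto
    have nz: "z + 1 \<noteq> 0" "z + Q \<noteq> 0" using that by (auto simp: add_eq_0_iff minus_equation_iff)
    have "S z / Jp z Q = ((z+1)*(z+Q)*S2 z) / ((z+1)*(z+Q)/z*J2 z)"
      using Sfac[OF z0] Jfac[OF z0] by simp
    also have "\<dots> = z * S2 z / J2 z"
    proof -
      have gen: "a \<noteq> 0 \<Longrightarrow> d \<noteq> 0 \<Longrightarrow> (a*c)/(a/z*d) = z*c/d" for a c d :: complex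
        using z0 by (simp add: field_simps)
      show ?thesis using gen[of "(z+1)*(z+Q)" "J2 z" "S2 z"] nz J2nz[OF that(1)] by simp
    qed
    finally show ?thesis unfolding h_def by simp
  qed
  have hper: "h (Q * x) = h x" if "x \<in> U" "x \<noteq> -1" "x \<noteq> -Q" "Q * x \<in> U" "Q * x \<noteq> -1" "Q * x \<noteq> -Q" for x
  proof -
    have x0: "x \<noteq> 0" using U0 that by auto
    have "h (Q * x) = S (Q * x) / Jp (Q * x) Q" by (rule hS) (use that in auto)
    also have "\<dots> = (S x / x) / (Jp x Q / x)"
      unfolding S_def using Sth_shift[OF Q Q0 x0] Jp_shift[OF Q Q0 x0] by simp
    also have "\<dots> = S x / Jp x Q" using x0 by (simp add: field_simps)
    also have "\<dots> = h x" by (rule hS[symmetric]) (use that in auto)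
    finally show ?thesis .
  qed
  define A where "A = {z::complex. norm Q \<le> norm z \<and> norm z \<le> 1}"
  have nQ1: "norm Q ^ 2 < norm Q"
    using Q nQ by (simp add: power2_eq_square)
  have one_lt: "1 < 1 / norm Q" using Q nQ by (simp add: field_simps)
  have AU: "A \<subseteq> U" unfolding A_def U_def using nQ1 one_lt by auto
  have compA: "compact A"
  proof -
    have "A = cball 0 1 - ball 0 (norm Q)" unfolding A_def by (auto simp: dist_norm)
    then show ?thesis by (auto intro!: compact_diff)
  qed
  have Ane: "A \<noteq> {}" unfolding A_def using Q by (auto intro!: exI[of _ 1])
  have "continuous_on A (\<lambda>z. norm (h z))"
    by (intro continuous_intros holomorphic_on_imp_continuous_on holomorphic_on_subset[OF hholo AU])
  then obtain \<xi> where \<xi>: "\<xi> \<in> A" "\<And>y. y \<in> A \<Longrightarrow> norm (h y) \<le> norm (h \<xi>)"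
    using continuous_attains_sup[OF compA Ane] by blast
  have bound: "norm (h w) \<le> norm (h \<xi>)" if w: "w \<in> U" for w
  proof -
    have w': "norm Q ^ 2 < norm w" "norm w < 1 / norm Q" using w unfolding U_def by auto
    consider "w \<in> A" | "norm w > 1" | "norm w < norm Q" unfolding A_def by force
    then show ?thesis
    proof cases
      case 1 then show ?thesis by (rule \<xi>(2))
    next
      case 2
      have QwA: "Q * w \<in> A"
      proof -
        have "norm (Q * w) = norm Q * norm w" by (simp add: norm_mult)
        moreover have "norm Q * norm w \<ge> norm Q" using 2 nQ by simp
        moreover have "norm Q * norm w \<le> 1" using w'(2) nQ by (simp add: field_simps)
        ultimately show ?thesis unfolding A_def by simp
      qed
      have nQw: "norm (Q * w) < 1" using w'(2) nQ by (simp add: norm_mult field_simps)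
      have "h (Q * w) = h w"
      proof (rule hper)
        show "w \<in> U" by fact
        show "w \<noteq> -1" "w \<noteq> -Q" using 2 Q by auto
        show "Q * w \<in> U" using QwA AU by auto
        show "Q * w \<noteq> -1" using nQw by auto
        show "Q * w \<noteq> -Q"
        proof
          assume "Q * w = -Q"
          then have "Q * w = Q * (-1)" by simp
          then have "w = -1" using Q0 by (simp only: mult_cancel_left) simp
          then show False using 2 by simp
        qed
      qed
      then show ?thesis using \<xi>(2)[OF QwA] by simp
    next
      case 3
      define w' where "w' = w / Q"
      have ww: "w = Q * w'" unfolding w'_def using Q0 by simp
      have w'A: "w' \<in> A"
      proof -
        have "norm w' = norm w / norm Q" unfolding w'_def by (simp add: norm_divide)
        moreover have "norm w / norm Q \<le> 1" using 3 nQ by (simp add: field_simps)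
        moreover have "norm w / norm Q \<ge> norm Q" using w'(1) nQ by (simp add: field_simps power2_eq_square)
        ultimately show ?thesis unfolding A_def by simp
      qed
      have nw'big: "norm w' > norm Q"
      proof -
        have "norm w' = norm w / norm Q" unfolding w'_def by (simp add: norm_divide)
        moreover have "norm w / norm Q > norm Q" using w'(1) nQ by (simp add: field_simps power2_eq_square)
        ultimately show ?thesis by simp
      qed
      have nw'small: "norm w' < 1"
        using 3 nQ unfolding w'_def by (simp add: norm_divide field_simps)
      have "h (Q * w') = h w'"
      proof (rule hper)
        show "w' \<in> U" using w'A AU by auto
        show "w' \<noteq> -1" using nw'small by auto
        show "w' \<noteq> -Q" using nw'big by auto
        show "Q * w' \<in> U" using w ww by simp
        show "Q * w' \<noteq> -1" using 3 Q ww by (metis norm_minus_cancel norm_one order.strict_trans not_less_iff_gr_or_eq)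
        show "Q * w' \<noteq> -Q"
        proof
          assume "Q * w' = -Q"
          then have "Q * w' = Q * (-1)" by simp
          then have "w' = -1" using Q0 by (simp only: mult_cancel_left) simp
          then show False using nw'small by simp
        qed
      qed
      then show ?thesis using \<xi>(2)[OF w'A] ww by simp
    qed
  qed
  have "h constant_on U"
    by (rule maximum_modulus_principle[OF hholo openU connU openU order_refl _ bound])
       (use \<xi>(1) AU in auto)
  then obtain c where c: "\<And>z. z \<in> U \<Longrightarrow> h z = c" unfolding constant_on_def by blast
  show ?thesis
  proof (intro exI allI impI)
    fix z :: complex assume "norm Q ^ 2 < norm z \<and> norm z < 1 / norm Q"
    then have zU: "z \<in> U" unfolding U_def by simp
    show "Sth z Q = c * Jp z Q"
    proof (cases "z = -1 \<or> z = -Q")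
      case True
      then show ?thesis using Sm1 SmQ Jp_zero1[OF Q] Jp_zero2[OF Q Q0] unfolding S_def by auto
    next
      case False
      have "Jp z Q \<noteq> 0"
      proof -
        have z0: "z \<noteq> 0" using U0 zU by auto
        have "z + 1 \<noteq> 0" "z + Q \<noteq> 0" using False by (auto simp: add_eq_0_iff minus_equation_iff)
        then show ?thesis using Jfac[OF z0] J2nz[OF zU] z0 by simp
      qed
      then show ?thesis using hS[OF zU] c[OF zU] False unfolding S_def by (auto simp: field_simps)
    qed
  qed
qed


lemma powi_split: "(p::complex) \<noteq> 0 \<Longrightarrow> e = e1 + e2 \<Longrightarrow> p powi e = p powi e1 * p powi e2"
  by (simp add: power_int_add)

lemma term_pow:
  fixes p :: complex
  assumes "p \<noteq> 0"
  shows "(p powi a) powi n * (p powi (2*b)) ^ tri n = p powi (a*n + b*(n*(n-1)))"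
proof -
  have ev: "even (n*(n-1))" by auto
  then have e2: "2 * (n*(n-1) div 2) = n*(n-1)" by simp
  have "(p powi (2*b)) ^ tri n = (p powi (2*b)) powi (n*(n-1) div 2)" by (rule tri_powi)
  also have "\<dots> = p powi (2*b*(n*(n-1) div 2))" by (simp add: power_int_mult)
  also have "2*b*(n*(n-1) div 2) = b*(n*(n-1))" using e2 by (metis mult.assoc mult.commute)
  finally have "(p powi (2*b)) ^ tri n = p powi (b*(n*(n-1)))" .
  moreover have "(p powi a) powi n = p powi (a*n)" by (simp add: power_int_mult)
  ultimately show ?thesis using assms by (simp add: power_int_add)
qed

lemma has_sum_product_int:
  fixes f g :: "int \<Rightarrow> complex"
  assumes f: "(f has_sum a) UNIV" and fn: "(\<lambda>n. norm (f n)) summable_on UNIV"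
      and g: "(g has_sum b) UNIV" and gn: "(\<lambda>n. norm (g n)) summable_on UNIV"
  shows "((\<lambda>(m,n). f m * g n) has_sum (a*b)) UNIV"
proof -
  define B where "B = (\<Sum>\<^sub>\<infinity>n. norm (g n))"
  have gB: "((\<lambda>n. norm (g n)) has_sum B) UNIV" using gn unfolding B_def by (rule has_sum_infsum)
  have ns: "(\<lambda>(m,n). norm (f m * g n)) summable_on (UNIV \<times> UNIV)"
  proof (rule summable_on_SigmaI[where g = "\<lambda>m. norm (f m) * B"])
    fix m :: int
    show "((\<lambda>n. case (m, n) of (m, n) \<Rightarrow> norm (f m * g n)) has_sum norm (f m) * B) UNIV"
      using has_sum_cmult_right[OF gB, of "norm (f m)"] by (simp add: norm_mult)
  next
    show "(\<lambda>m. norm (f m) * B) summable_on UNIV"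
      by (rule summable_on_cmult_left[OF fn])
  qed auto
  have s: "(\<lambda>(m,n). f m * g n) summable_on (UNIV \<times> UNIV)"
    by (rule abs_summable_summable) (use ns in \<open>simp add: case_prod_unfold\<close>)
  have "((\<lambda>(m,n). f m * g n) has_sum (a*b)) (Sigma UNIV (\<lambda>_. UNIV))"
  proof (rule has_sum_SigmaI[where g = "\<lambda>m. f m * b"])
    fix m :: int
    show "((\<lambda>n. case (m, n) of (m, n) \<Rightarrow> f m * g n) has_sum f m * b) UNIV"
      using has_sum_cmult_right[OF g, of "f m"] by simp
  next
    show "((\<lambda>m. f m * b) has_sum a * b) UNIV" by (rule has_sum_cmult_left[OF f])
  next
    show "(\<lambda>(m,n). f m * g n) summable_on Sigma UNIV (\<lambda>_. UNIV)" using s by simp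
  qed
  then show ?thesis by simp
qed

lemma sq_powi: "((q::complex)^2) powi k = q powi (2*k)"
  by (simp add: power_int_power)

definition T3f :: "complex \<Rightarrow> complex" where "T3f q = Sth q (q^2)"
definition T2f :: "complex \<Rightarrow> complex" where "T2f q = Sth (q^2) (q^2)"

lemma T3f_has:
  fixes q :: complex
  assumes q: "norm q < 1" "q \<noteq> 0"
  shows "((\<lambda>n. q powi (n*n)) has_sum T3f q) UNIV" "(\<lambda>n. norm (q powi (n*n))) summable_on UNIV"
proof -
  have Q: "norm (q^2) < 1" using q by (simp add: norm_power power_less_one_iff)
  have t: "q powi n * (q^2) ^ tri n = q powi (n*n)" for n
    using term_pow[OF q(2), of 1 n 1] by (simp add: algebra_simps)
  have "((\<lambda>n. q powi n * (q^2) ^ tri n) has_sum T3f q) UNIV"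
    unfolding T3f_def Sth_def using Sth_summable[OF Q q(2)] by (rule has_sum_infsum)
  then show "((\<lambda>n. q powi (n*n)) has_sum T3f q) UNIV" unfolding t .
  show "(\<lambda>n. norm (q powi (n*n))) summable_on UNIV"
    using Sth_has_sum(2)[OF Q q(2)] unfolding t .
qed

lemma T2f_has:
  fixes q :: complex
  assumes q: "norm q < 1" "q \<noteq> 0"
  shows "((\<lambda>n. q powi (n*n+n)) has_sum T2f q) UNIV" "(\<lambda>n. norm (q powi (n*n+n))) summable_on UNIV"
proof -
  have Q: "norm (q^2) < 1" using q by (simp add: norm_power power_less_one_iff)
  have q2: "q^2 \<noteq> 0" using q by simp
  have t: "(q^2) powi n * (q^2) ^ tri n = q powi (n*n+n)" for n
    using term_pow[OF q(2), of 2 n 1] by (simp add: algebra_simps)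
  have "((\<lambda>n. (q^2) powi n * (q^2) ^ tri n) has_sum T2f q) UNIV"
    unfolding T2f_def Sth_def using Sth_summable[OF Q q2] by (rule has_sum_infsum)
  then show "((\<lambda>n. q powi (n*n+n)) has_sum T2f q) UNIV" unfolding t .
  show "(\<lambda>n. norm (q powi (n*n+n))) summable_on UNIV"
    using Sth_has_sum(2)[OF Q q2] unfolding t .
qed

lemma bijE: "bij_betw (\<lambda>(i::int,j::int). (i+j, i-j)) UNIV {(m,n). even (m+n)}"
  by (rule bij_betwI[where g = "\<lambda>(m,n). ((m+n) div 2, (m-n) div 2)"]) (auto, presburger+)

lemma bijO: "bij_betw (\<lambda>(i::int,j::int). (i+j+1, i-j)) UNIV {(m,n). odd (m+n)}"
  by (rule bij_betwI[where g = "\<lambda>(m,n). ((m+n-1) div 2, (m-n) div 2)"]) (auto, presburger+)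

lemma bijO': "bij_betw (\<lambda>(i::int,j::int). (i+j, i-j-1)) UNIV {(m,n). odd (m+n)}"
  by (rule bij_betwI[where g = "\<lambda>(m,n). ((m+n+1) div 2, (m-n-1) div 2)"]) (auto, presburger+)

lemma split_EO:
  fixes F :: "int \<times> int \<Rightarrow> complex"
  assumes "(F has_sum a) {(m,n). even (m+n)}" "(F has_sum b) {(m,n). odd (m+n)}"
  shows "(F has_sum (a+b)) UNIV"
proof -
  have "(F has_sum (a+b)) ({(m,n). even (m+n)} \<union> {(m,n). odd (m+n)})"
    by (rule has_sum_Un_disjoint[OF assms]) auto
  moreover have "{(m::int,n::int). even (m+n)} \<union> {(m,n). odd (m+n)} = UNIV" by auto
  ultimately show ?thesis by simp
qed

lemma theta_I1:
  fixes q :: complex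
  assumes q: "norm q < 1" "q \<noteq> 0"
  shows "T3f q ^ 2 = T3f (q^2) ^ 2 + q * T2f (q^2) ^ 2"
proof -
  have q2: "norm (q^2) < 1" "q^2 \<noteq> 0" using q by (auto simp: norm_power power_less_one_iff)
  define F where "F = (\<lambda>(m::int,n::int). q powi (m*m) * q powi (n*n))"
  have all: "(F has_sum (T3f q * T3f q)) UNIV"
    unfolding F_def by (rule has_sum_product_int[OF T3f_has[OF q] T3f_has[OF q]])
  have "((\<lambda>(i,j). (q^2) powi (i*i) * (q^2) powi (j*j)) has_sum (T3f (q^2) * T3f (q^2))) UNIV"
    by (rule has_sum_product_int[OF T3f_has[OF q2] T3f_has[OF q2]])
  moreover have "(\<lambda>(i,j). (q^2) powi (i*i) * (q^2) powi (j*j)) = (\<lambda>x. F ((\<lambda>(i,j). (i+j, i-j)) x))"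
  proof (intro ext, clarify)
    fix i j :: int
    have "(q^2) powi (i*i) * (q^2) powi (j*j) = q powi (2*(i*i) + 2*(j*j))"
      using q by (simp add: sq_powi power_int_add)
    also have "\<dots> = q powi ((i+j)*(i+j)) * q powi ((i-j)*(i-j))"
      by (rule powi_split[OF q(2)]) (simp add: algebra_simps)
    finally show "(q^2) powi (i*i) * (q^2) powi (j*j) = F (i+j, i-j)" unfolding F_def by simp
  qed
  ultimately have E: "(F has_sum (T3f (q^2) * T3f (q^2))) {(m,n). even (m+n)}"
    using has_sum_reindex_bij_betw[OF bijE, of F] by simp
  have "((\<lambda>(i,j). q * ((q^2) powi (i*i+i) * (q^2) powi (j*j+j))) has_sum (q * (T2f (q^2) * T2f (q^2)))) UNIV"
    using has_sum_cmult_right[OF has_sum_product_int[OF T2f_has[OF q2] T2f_has[OF q2]], of q]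
    by (simp add: case_prod_unfold)
  moreover have "(\<lambda>(i,j). q * ((q^2) powi (i*i+i) * (q^2) powi (j*j+j))) = (\<lambda>x. F ((\<lambda>(i,j). (i+j+1, i-j)) x))"
  proof (intro ext, clarify)
    fix i j :: int
    have "q * ((q^2) powi (i*i+i) * (q^2) powi (j*j+j)) = q powi 1 * q powi (2*(i*i+i) + 2*(j*j+j))"
      using q by (simp add: sq_powi power_int_add)
    also have "\<dots> = q powi (1 + (2*(i*i+i) + 2*(j*j+j)))"
      using q by (simp add: power_int_add)
    also have "\<dots> = q powi ((i+j+1)*(i+j+1)) * q powi ((i-j)*(i-j))"
      by (rule powi_split[OF q(2)]) (simp add: algebra_simps)
    finally show "q * ((q^2) powi (i*i+i) * (q^2) powi (j*j+j)) = F (i+j+1, i-j)" unfolding F_def by simp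
  qed
  ultimately have O: "(F has_sum (q * (T2f (q^2) * T2f (q^2)))) {(m,n). odd (m+n)}"
    using has_sum_reindex_bij_betw[OF bijO, of F] by simp
  have "(F has_sum (T3f (q^2) * T3f (q^2) + q * (T2f (q^2) * T2f (q^2)))) UNIV"
    by (rule split_EO[OF E O])
  with all have "T3f q * T3f q = T3f (q^2) * T3f (q^2) + q * (T2f (q^2) * T2f (q^2))"
    using has_sum_unique by blast
  then show ?thesis by (simp add: power2_eq_square)
qed

lemma theta_I2:
  fixes q :: complex
  assumes q: "norm q < 1" "q \<noteq> 0"
  shows "T2f q ^ 2 = 2 * T2f (q^2) * T3f (q^2)"
proof -
  have q2: "norm (q^2) < 1" "q^2 \<noteq> 0" using q by (auto simp: norm_power power_less_one_iff)
  define F where "F = (\<lambda>(m::int,n::int). q powi (m*m+m) * q powi (n*n+n))"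
  have all: "(F has_sum (T2f q * T2f q)) UNIV"
    unfolding F_def by (rule has_sum_product_int[OF T2f_has[OF q] T2f_has[OF q]])
  have "((\<lambda>(i,j). (q^2) powi (i*i+i) * (q^2) powi (j*j)) has_sum (T2f (q^2) * T3f (q^2))) UNIV"
    by (rule has_sum_product_int[OF T2f_has[OF q2] T3f_has[OF q2]])
  moreover have "(\<lambda>(i,j). (q^2) powi (i*i+i) * (q^2) powi (j*j)) = (\<lambda>x. F ((\<lambda>(i,j). (i+j, i-j)) x))"
  proof (intro ext, clarify)
    fix i j :: int
    have "(q^2) powi (i*i+i) * (q^2) powi (j*j) = q powi (2*(i*i+i) + 2*(j*j))"
      using q by (simp add: sq_powi power_int_add)
    also have "\<dots> = q powi ((i+j)*(i+j)+(i+j)) * q powi ((i-j)*(i-j)+(i-j))"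
      by (rule powi_split[OF q(2)]) (simp add: algebra_simps)
    finally show "(q^2) powi (i*i+i) * (q^2) powi (j*j) = F (i+j, i-j)" unfolding F_def by simp
  qed
  ultimately have E: "(F has_sum (T2f (q^2) * T3f (q^2))) {(m,n). even (m+n)}"
    using has_sum_reindex_bij_betw[OF bijE, of F] by simp
  have "((\<lambda>(i,j). (q^2) powi (i*i) * (q^2) powi (j*j+j)) has_sum (T3f (q^2) * T2f (q^2))) UNIV"
    by (rule has_sum_product_int[OF T3f_has[OF q2] T2f_has[OF q2]])
  moreover have "(\<lambda>(i,j). (q^2) powi (i*i) * (q^2) powi (j*j+j)) = (\<lambda>x. F ((\<lambda>(i,j). (i+j, i-j-1)) x))"
  proof (intro ext, clarify)
    fix i j :: int
    have "(q^2) powi (i*i) * (q^2) powi (j*j+j) = q powi (2*(i*i) + 2*(j*j+j))"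
      using q by (simp add: sq_powi power_int_add)
    also have "\<dots> = q powi ((i+j)*(i+j)+(i+j)) * q powi ((i-j-1)*(i-j-1)+(i-j-1))"
      by (rule powi_split[OF q(2)]) (simp add: algebra_simps)
    finally show "(q^2) powi (i*i) * (q^2) powi (j*j+j) = F (i+j, i-j-1)" unfolding F_def by simp
  qed
  ultimately have O: "(F has_sum (T2f (q^2) * T3f (q^2))) {(m,n). odd (m+n)}"
    using has_sum_reindex_bij_betw[OF bijO', of F] by (simp add: mult.commute)
  have "(F has_sum (T2f (q^2) * T3f (q^2) + T2f (q^2) * T3f (q^2))) UNIV"
    by (rule split_EO[OF E O])
  with all have "T2f q * T2f q = T2f (q^2) * T3f (q^2) + T2f (q^2) * T3f (q^2)"
    using has_sum_unique by blast
  then show ?thesis by (simp add: power2_eq_square)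
qed


lemma Pw_bound:
  fixes Q w :: complex
  assumes Q: "norm Q < 1" and w: "norm w < 1"
  shows "norm (Pw Q w - 1) \<le> norm w / (1 - norm w)"
proof -
  define f where "f = (\<lambda>k. Q ^ (k*(k-1) div 2) * w ^ k)"
  have sf: "summable (\<lambda>k. norm (f k))" unfolding f_def by (rule summable_tri[OF Q])
  have sf': "summable f" by (rule summable_norm_cancel[OF sf])
  have sfS: "summable (\<lambda>k. norm (f (Suc k)))" using summable_Suc_iff[of "\<lambda>k. norm (f k)"] sf by simp
  have "Pw Q w - 1 = (\<Sum>k. f (Suc k))"
    using suminf_split_head[OF sf'] unfolding Pw_def f_def by simp
  moreover have "norm (\<Sum>k. f (Suc k)) \<le> (\<Sum>k. norm (f (Suc k)))"
    by (rule summable_norm[OF sfS])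
  moreover have "(\<Sum>k. norm (f (Suc k))) \<le> (\<Sum>k. norm w ^ Suc k)"
  proof (rule suminf_le)
    fix k
    have "norm (f (Suc k)) = norm Q ^ (Suc k * k div 2) * norm w ^ Suc k"
      unfolding f_def by (simp add: norm_mult norm_power)
    also have "\<dots> \<le> 1 * norm w ^ Suc k"
      using Q by (intro mult_right_mono power_le_one) auto
    finally show "norm (f (Suc k)) \<le> norm w ^ Suc k" by simp
  next
    show "summable (\<lambda>k. norm (f (Suc k)))" by (rule sfS)
    show "summable (\<lambda>k. norm w ^ Suc k)" using w by (simp add: summable_Suc_iff)
  qed
  moreover have "(\<Sum>k. norm w ^ Suc k) = norm w / (1 - norm w)"
  proof -
    have "(\<Sum>k. norm w ^ Suc k) = norm w * (\<Sum>k. norm w ^ k)"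
      by (subst suminf_mult[symmetric]) (use w in auto)
    also have "\<dots> = norm w / (1 - norm w)" using w by (simp add: suminf_geometric)
    finally show ?thesis .
  qed
  ultimately show ?thesis by simp
qed

lemma T3f_small_nz:
  fixes p :: complex
  assumes p: "norm p \<le> 1/4" "p \<noteq> 0"
  shows "T3f p \<noteq> 0"
proof
  assume T0: "T3f p = 0"
  have np: "norm p < 1" using p by simp
  have Q: "norm (p^2) < 1" using np by (simp add: norm_power power_less_one_iff)
  have "T3f p = Pw (p^2) p + (p^2/p) * Pw (p^2) ((p^2)^2/p)"
    unfolding T3f_def by (rule Sth_eq[OF Q p(2)])
  also have "(p^2/p) = p" using p by (simp add: power2_eq_square)
  also have "(p^2)^2/p = p^3" using p by (simp add: power2_eq_square power3_eq_cube)
  finally have e: "T3f p = Pw (p^2) p + p * Pw (p^2) (p^3)" .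
  have n3: "norm (p^3) \<le> 1/4"
  proof -
    have "norm (p^3) = norm p ^ 3" by (simp add: norm_power)
    also have "\<dots> \<le> norm p"
    proof -
      have "norm p * norm p \<le> 1" using np by (intro mult_le_one) auto
      then have "(norm p * norm p) * norm p \<le> 1 * norm p" by (intro mult_right_mono) auto
      then show ?thesis by (simp add: power3_eq_cube)
    qed
    finally show ?thesis using p by simp
  qed
  have b1: "norm (Pw (p^2) p - 1) \<le> 1/3"
  proof -
    have "norm (Pw (p^2) p - 1) \<le> norm p / (1 - norm p)" by (rule Pw_bound[OF Q np])
    also have "\<dots> \<le> 1/3" using p by (simp add: field_simps)
    finally show ?thesis .
  qed
  have b2: "norm (Pw (p^2) (p^3)) \<le> 4/3"
  proof -
    have "norm (Pw (p^2) (p^3) - 1) \<le> norm (p^3) / (1 - norm (p^3))"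
      by (rule Pw_bound[OF Q]) (use n3 in simp)
    also have "\<dots> \<le> 1/3" using n3 by (simp add: field_simps)
    finally have "norm (Pw (p^2) (p^3) - 1) \<le> 1/3" .
    then show ?thesis using norm_triangle_ineq2[of "Pw (p^2) (p^3)" 1] by simp
  qed
  have "norm (p * Pw (p^2) (p^3)) \<le> 1/4 * (4/3)"
    unfolding norm_mult using p b2 by (intro mult_mono) auto
  then have b3: "norm (p * Pw (p^2) (p^3)) \<le> 1/3" by simp
  have AB: "Pw (p^2) p + p * Pw (p^2) (p^3) = 0" using T0 e by simp
  have "(1 - Pw (p^2) p) - p * Pw (p^2) (p^3) = 1 - (Pw (p^2) p + p * Pw (p^2) (p^3))"
    by (simp add: algebra_simps)
  also have "\<dots> = 1" unfolding AB by simp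
  finally have X: "(1 - Pw (p^2) p) - p * Pw (p^2) (p^3) = 1" .
  have "1 = norm ((1 - Pw (p^2) p) - p * Pw (p^2) (p^3))" by (simp only: X norm_one)
  also have "\<dots> \<le> norm (1 - Pw (p^2) p) + norm (p * Pw (p^2) (p^3))" by (rule norm_triangle_ineq4)
  also have "\<dots> \<le> 1/3 + 1/3" using b1 b3 by (simp add: norm_minus_commute)
  finally show False by simp
qed

lemma theta_step:
  fixes q :: complex
  assumes q: "norm q < 1" "q \<noteq> 0" and z: "T3f q = 0" "T2f q = 0"
  shows "T3f (q^2) = 0 \<and> T2f (q^2) = 0"
proof -
  have i1: "T3f (q^2) ^ 2 + q * T2f (q^2) ^ 2 = 0" using theta_I1[OF q] z by simp
  have i2: "T2f (q^2) * T3f (q^2) = 0" using theta_I2[OF q] z by simp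
  show ?thesis
  proof (cases "T2f (q^2) = 0")
    case True then show ?thesis using i1 by simp
  next
    case False
    then have "T3f (q^2) = 0" using i2 by simp
    then show ?thesis using i1 q False by simp
  qed
qed

lemma theta_not_both_zero:
  fixes q :: complex
  assumes q: "norm q < 1" "q \<noteq> 0"
  shows "\<not> (T3f q = 0 \<and> T2f q = 0)"
proof
  assume z: "T3f q = 0 \<and> T2f q = 0"
  have all: "T3f (q ^ (2^k)) = 0 \<and> T2f (q ^ (2^k)) = 0" for k
  proof (induction k)
    case 0 then show ?case using z by simp
  next
    case (Suc k)
    have qk: "norm (q ^ (2^k)) < 1" "q ^ (2^k) \<noteq> 0"
      using q by (auto simp: norm_power power_less_one_iff)
    have "q ^ (2 ^ Suc k) = (q ^ (2^k))^2" by (simp add: power_mult[symmetric] mult.commute)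
    then show ?case using theta_step[OF qk] Suc by simp
  qed
  have "(\<lambda>n. norm q ^ n) \<longlonglongrightarrow> 0" using q by (intro LIMSEQ_power_zero) auto
  then have "eventually (\<lambda>n. norm q ^ n < 1/4) sequentially" by (intro order_tendstoD) auto
  then obtain N where N: "norm q ^ N < 1/4" by (auto simp: eventually_sequentially)
  have "norm (q ^ (2^N)) = norm q ^ (2^N)" by (simp add: norm_power)
  also have "\<dots> \<le> norm q ^ N"
    using q by (intro power_decreasing) (auto intro: less_imp_le[OF less_exp])
  finally have "norm (q ^ (2^N)) \<le> 1/4" using N by simp
  then have "T3f (q ^ (2^N)) \<noteq> 0" by (rule T3f_small_nz) (use q in simp)
  then show False using all by simp
qed

lemma jtp:
  fixes Q :: complex
  assumes Q: "norm Q < 1" and Q0: "Q \<noteq> 0"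
  shows "\<exists>c. c \<noteq> 0 \<and> (\<forall>z. norm Q ^ 2 < norm z \<and> norm z < 1 / norm Q \<longrightarrow> Sth z Q = c * Jp z Q)"
proof -
  obtain c where c: "\<And>z. norm Q ^ 2 < norm z \<and> norm z < 1 / norm Q \<Longrightarrow> Sth z Q = c * Jp z Q"
    using jtp_const[OF Q Q0] by blast
  have "c \<noteq> 0"
  proof
    assume c0: "c = 0"
    define q where "q = csqrt Q"
    have qq: "q^2 = Q" unfolding q_def by simp
    have nq: "norm q = sqrt (norm Q)" unfolding q_def by simp
    have nQ: "0 < norm Q" using Q0 by simp
    have q1: "norm q < 1" "q \<noteq> 0" using Q Q0 nq by (auto simp: q_def)
    have sq: "norm Q ^ 2 < sqrt (norm Q)"
    proof -
      have "norm Q ^ 2 < norm Q" using Q nQ by (simp add: power2_eq_square)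
      also have "norm Q \<le> sqrt (norm Q)" using Q nQ by (simp add: real_le_rsqrt power2_eq_square mult_le_one)
      finally show ?thesis .
    qed
    have sq2: "sqrt (norm Q) < 1 / norm Q"
    proof -
      have "sqrt (norm Q) < 1" using Q nQ by simp
      also have "1 < 1 / norm Q" using Q nQ by (simp add: field_simps)
      finally show ?thesis .
    qed
    have "Sth q Q = 0" using c[of q] c0 sq sq2 nq by simp
    then have "T3f q = 0" unfolding T3f_def qq .
    moreover have "Sth Q Q = 0"
    proof -
      have "norm Q * norm Q < 1 * 1" by (rule mult_strict_mono) (use Q nQ in auto)
      then show ?thesis using c[of Q] c0 Q nQ by (simp add: power2_eq_square field_simps)
    qed
    then have "T2f q = 0" unfolding T2f_def qq .
    ultimately show False using theta_not_both_zero[OF q1] by simp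
  qed
  then show ?thesis using c by blast
qed


lemma prod_lim: "convergent_prod f \<Longrightarrow> (\<lambda>n. \<Prod>i<n. f i) \<longlonglongrightarrow> prodinf f"
  for f :: "nat \<Rightarrow> complex"
  using convergent_prod_LIMSEQ[of f] LIMSEQ_lessThan_iff_atMost[of "\<lambda>A. \<Prod>i\<in>A. f i"] by simp

lemma prod_lim_mult:
  fixes f :: "nat \<Rightarrow> complex"
  assumes "convergent_prod f" "k > 0"
  shows "(\<lambda>n. \<Prod>i<k*n. f i) \<longlonglongrightarrow> prodinf f"
proof -
  have "strict_mono (\<lambda>n. k*n)" using assms(2) by (auto simp: strict_mono_def)
  from LIMSEQ_subseq_LIMSEQ[OF prod_lim[OF assms(1)] this] show ?thesis by (simp add: o_def)
qed

lemma conv_prod_powi: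
  fixes q s :: complex and e :: "nat \<Rightarrow> int"
  assumes q: "norm q < 1" and s: "norm s \<le> 1" and e: "\<And>n. e n = -1 \<or> e n = 0 \<or> e n = 1"
  shows "convergent_prod (\<lambda>n. (1 + s * q^(n+1)) powi e n)"
proof -
  have bound: "norm ((1 + s * q^(n+1)) powi e n - 1) \<le> norm q ^ (n+1) / (1 - norm q)" for n
  proof -
    define x where "x = s * q^(n+1)"
    have nx: "norm x \<le> norm q ^ (n+1)"
    proof -
      have "norm x = norm s * norm q ^ (n+1)" unfolding x_def by (simp add: norm_mult norm_power)
      also have "\<dots> \<le> 1 * norm q ^ (n+1)" using s by (intro mult_right_mono) auto
      finally show ?thesis by simp
    qed
    have nq1': "norm q ^ (n+1) \<le> norm q"
    proof -
      have "norm q ^ (n+1) \<le> norm q ^ 1" using q by (intro power_decreasing) auto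
      then show ?thesis by simp
    qed
    have x1: "norm x < 1" using nx nq1' q by linarith
    have pos: "0 < 1 - norm q" using q by simp
    consider "e n = -1" | "e n = 0" | "e n = 1" using e by blast
    then show ?thesis
    proof cases
      case 1
      have x0: "1 + x \<noteq> 0"
      proof
        assume "1 + x = 0"
        then have "x = -1" using add_eq_0_iff[of 1 x] by simp
        then show False using x1 by simp
      qed
      have "(1 + x) powi e n - 1 = - x / (1 + x)" using 1 x0 by (simp add: field_simps)
      then have "norm ((1 + x) powi e n - 1) = norm x / norm (1 + x)" by (simp add: norm_divide)
      also have "\<dots> \<le> norm q ^ (n+1) / (1 - norm q)"
      proof (rule frac_le)
        show "norm x \<le> norm q ^ (n+1)" by (rule nx)
        show "0 < 1 - norm q" by (rule pos)
        have "1 - norm x \<le> norm (1 + x)" using norm_triangle_ineq2[of 1 "-x"] by (simp add: norm_minus_commute)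
        then show "1 - norm q \<le> norm (1 + x)" using nx nq1' by linarith
      qed auto
      finally show ?thesis unfolding x_def .
    next
      case 2 then show ?thesis using pos by simp
    next
      case 3
      have "norm ((1 + x) powi e n - 1) = norm x" using 3 by simp
      also have "\<dots> \<le> norm q ^ (n+1) / 1" using nx by simp
      also have "\<dots> \<le> norm q ^ (n+1) / (1 - norm q)"
        using pos q by (intro divide_left_mono) auto
      finally show ?thesis unfolding x_def .
    qed
  qed
  have sg: "summable (\<lambda>n. norm q ^ (n+1) / (1 - norm q))"
  proof -
    have "summable (\<lambda>n. norm q ^ n)" using q by simp
    then have "summable (\<lambda>n. norm q ^ (n+1))" by (rule summable_ignore_initial_segment)
    then show ?thesis by (rule summable_divide)
  qed
  have "summable (\<lambda>n. norm ((1 + s * q^(n+1)) powi e n - 1))"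
  proof (rule summable_comparison_test[OF _ sg])
    show "\<exists>N. \<forall>n\<ge>N. norm (norm ((1 + s * q^(n+1)) powi e n - 1)) \<le> norm q ^ (n+1) / (1 - norm q)"
      using bound by auto
  qed
  then show ?thesis
    by (intro abs_convergent_prod_imp_convergent_prod summable_imp_abs_convergent_prod)
qed

lemma qpow_add: "qpow a \<tau> * qpow b \<tau> = qpow (a+b) \<tau>"
  by (simp add: qpow_def exp_add[symmetric] algebra_simps)

lemma qpow_2tau: "qpow r (2*\<tau>) = qpow (2*r) \<tau>"
  by (simp add: qpow_def algebra_simps)

lemma qpow_sq: "qpow r \<tau> ^ 2 = qpow (2*r) \<tau>"
  by (simp add: power2_eq_square qpow_add)

lemma qpow_norm: "Im \<tau> > 0 \<Longrightarrow> norm (qpow 1 \<tau>) < 1"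
  by (simp add: qpow_def norm_exp_eq_Re)

lemma qpow_nz: "qpow r \<tau> \<noteq> 0"
  by (simp add: qpow_def)

lemma U_mem:
  fixes q :: complex
  assumes q: "norm q < 1" "q \<noteq> 0" and a: "0 < a" "a \<le> b"
  shows "norm (q^b) ^ 2 < norm (q^a) \<and> norm (q^a) < 1 / norm (q^b)"
proof -
  have nq: "0 < norm q" using q by simp
  have e1: "norm (q^b) ^ 2 = norm q ^ (b*2)" by (simp only: norm_power power_mult)
  have "norm q ^ (b*2) < norm q ^ a"
    using a q nq by (intro power_strict_decreasing) auto
  moreover have "norm q ^ a * norm q ^ b < 1"
  proof -
    have "norm q ^ a * norm q ^ b = norm q ^ (a+b)" by (simp add: power_add)
    also have "\<dots> < 1" using q nq a by (simp add: power_less_one_iff)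
    finally show ?thesis .
  qed
  moreover have "0 < norm q ^ b" using nq by simp
  ultimately show ?thesis using e1 by (simp add: less_divide_eq norm_power)
qed

lemma u_sq:
  fixes \<tau> :: complex
  assumes "Im \<tau> > 0"
  shows "u_fun \<tau> ^ 2 * T3f (qpow 1 \<tau>) = qpow (1/4) \<tau> * T2f (qpow 1 \<tau>) \<and> T3f (qpow 1 \<tau>) \<noteq> 0"
proof -
  define q where "q = qpow 1 \<tau>"
  have q: "norm q < 1" "q \<noteq> 0" unfolding q_def using assms by (auto simp: qpow_norm qpow_nz)
  have Q: "norm (q^2) < 1" "q^2 \<noteq> 0" using q by (auto simp: norm_power power_less_one_iff)
  define g where "g = (\<lambda>n::nat. (1 + 1 * q^(n+1)) powi ((-1) ^ (n+1) :: int))"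
  have gconv: "convergent_prod g"
    unfolding g_def by (rule conv_prod_powi[OF q(1)]) (auto simp: minus_one_power_iff)
  define A where "A = (\<Prod>n. 1 + q * (q^2)^n)"
  define B where "B = (\<Prod>n. 1 + q^2 * (q^2)^n)"
  have nzA: "1 + q * (q^2)^n \<noteq> 0" for n
  proof
    assume "1 + q * (q^2)^n = 0"
    then have "norm (q * (q^2)^n) = 1" by (metis add_eq_0_iff norm_minus_cancel norm_one)
    moreover have "norm (q * (q^2)^n) < 1"
    proof -
      have "norm (q * (q^2)^n) = norm q * norm q ^ (2*n)"
        by (simp add: norm_mult norm_power power_mult[symmetric])
      also have "\<dots> \<le> norm q * 1" using q by (intro mult_left_mono power_le_one) auto
      also have "\<dots> < 1" using q by simp
      finally show ?thesis .
    qed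
    ultimately show False by simp
  qed
  have A0: "A \<noteq> 0" unfolding A_def by (rule prod_geom_nonzero[OF Q(1) nzA])
  have part: "(\<Prod>i<2*m. g i) = (\<Prod>j<m. 1 + q^2 * (q^2)^j) / (\<Prod>j<m. 1 + q * (q^2)^j)" for m
  proof (induction m)
    case 0 then show ?case by simp
  next
    case (Suc m)
    have e: "2 * Suc m = Suc (Suc (2*m))" by simp
    have g1: "g (2*m) = inverse (1 + q * (q^2)^m)"
      unfolding g_def by (simp add: power_mult power2_eq_square mult.commute power_mult_distrib)
    have g2: "g (Suc (2*m)) = 1 + q^2 * (q^2)^m"
      unfolding g_def by (simp add: power_mult power2_eq_square power_mult_distrib algebra_simps)
    show ?case unfolding e prod.lessThan_Suc Suc.IH g1 g2
      using nzA[of m] by (simp add: field_simps)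
  qed
  have "(\<lambda>m. \<Prod>i<2*m. g i) \<longlonglongrightarrow> prodinf g" by (rule prod_lim_mult[OF gconv]) simp
  moreover have "(\<lambda>m. \<Prod>i<2*m. g i) \<longlonglongrightarrow> B / A"
    unfolding part A_def B_def
    by (intro tendsto_divide prod_lim conv_prod_geom Q(1)) (use A0 in \<open>simp add: A_def\<close>)
  ultimately have W: "prodinf g = B / A" by (rule LIMSEQ_unique)
  have u: "u_fun \<tau> = complex_of_real (sqrt 2) * qpow (1/8) \<tau> * prodinf g"
    unfolding u_fun_def g_def q_def by simp
  have u2: "u_fun \<tau> ^ 2 = 2 * qpow (1/4) \<tau> * (B/A)^2"
  proof -
    have "u_fun \<tau> ^ 2 = (complex_of_real (sqrt 2))^2 * qpow (1/8) \<tau> ^ 2 * (B/A)^2"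
      unfolding u W power_mult_distrib ..
    also have "(complex_of_real (sqrt 2))^2 = 2" by (simp flip: of_real_power)
    also have "qpow (1/8) \<tau> ^ 2 = qpow (1/4) \<tau>" by (simp add: qpow_sq)
    finally show ?thesis by simp
  qed
  obtain c where c0: "c \<noteq> 0" and c: "\<And>z. norm (q^2) ^ 2 < norm z \<and> norm z < 1 / norm (q^2) \<Longrightarrow> Sth z (q^2) = c * Jp z (q^2)"
    using jtp[OF Q] by blast
  have J1: "Jp q (q^2) = A * A"
    unfolding Jp_def A_def using q by (simp add: power2_eq_square)
  have J2: "Jp (q^2) (q^2) = 2 * B * B"
  proof -
    have "Jp (q^2) (q^2) = B * (\<Prod>n. 1 + 1 * (q^2)^n)" unfolding Jp_def B_def using Q by simp
    also have "(\<Prod>n. 1 + 1 * (q^2)^n) = (1 + 1) * (\<Prod>n. 1 + (1 * q^2) * (q^2)^n)"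
      by (rule prod_geom_head'[OF Q(1)])
    finally show ?thesis unfolding B_def by simp
  qed
  have T3: "T3f q = c * (A * A)"
    unfolding T3f_def using c[of q] U_mem[OF q, of 1 2] J1 by simp
  have T2: "T2f q = c * (2 * B * B)"
    unfolding T2f_def using c[of "q^2"] U_mem[OF q, of 2 2] J2 by simp
  show ?thesis
  proof
    show "u_fun \<tau> ^ 2 * T3f (qpow 1 \<tau>) = qpow (1/4) \<tau> * T2f (qpow 1 \<tau>)"
      unfolding q_def[symmetric] u2 T3 T2 using A0 by (simp add: field_simps power2_eq_square)
    show "T3f (qpow 1 \<tau>) \<noteq> 0" unfolding q_def[symmetric] T3 using c0 A0 by simp
  qed
qed


lemma alg_a:
  fixes X Y T3 T3' T2 T2' a b q :: complex
  assumes n: "T3 \<noteq> 0" "T3' \<noteq> 0" and X: "X*T3 = a*T2" and Y: "Y*T3' = b*T2'"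
      and ab: "a^2 = b" "b^2 = q" and I1: "T3^2 = T3'^2 + q*T2'^2" and I2: "T2^2 = 2*T2'*T3'"
  shows "X^2*(Y^2+1) = 2*Y"
proof -
  have X': "X = a*T2/T3" using X n by (simp add: field_simps)
  have Y': "Y = b*T2'/T3'" using Y n by (simp add: field_simps)
  have X2: "X^2 = b*(2*T2'*T3')/T3^2"
    unfolding X' using ab(1) I2 by (simp add: power_divide power_mult_distrib)
  have Y2: "Y^2 + 1 = T3^2/T3'^2"
  proof -
    have "Y^2 + 1 = (q*T2'^2 + T3'^2)/T3'^2"
      unfolding Y' using ab(2) n by (simp add: power_divide power_mult_distrib field_simps)
    also have "\<dots> = T3^2/T3'^2" using I1 by (simp add: add.commute)
    finally show ?thesis .
  qed
  have "X^2*(Y^2+1) = (b*(2*T2'*T3')/T3^2) * (T3^2/T3'^2)" unfolding X2 Y2 ..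
  also have "\<dots> = 2*(b*T2'/T3')" using n by (simp add: field_simps power2_eq_square)
  finally show ?thesis unfolding Y' .
qed

lemma part_a:
  fixes \<tau> :: complex
  assumes "Im \<tau> > 0"
  shows "let x = u_fun \<tau>; y = u_fun (2 * \<tau>) in x ^ 4 * (y ^ 4 + 1) = 2 * y ^ 2"
proof -
  define q where "q = qpow 1 \<tau>"
  have q: "norm q < 1" "q \<noteq> 0" unfolding q_def using assms by (auto simp: qpow_norm qpow_nz)
  have a1: "u_fun \<tau> ^ 2 * T3f q = qpow (1/4) \<tau> * T2f q" "T3f q \<noteq> 0"
    using u_sq[OF assms] unfolding q_def by auto
  have i2: "Im (2*\<tau>) > 0" using assms by simp
  have q2: "qpow (2*1) \<tau> = q^2" unfolding q_def qpow_sq by simp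
  have a2: "u_fun (2*\<tau>) ^ 2 * T3f (q^2) = qpow (1/2) \<tau> * T2f (q^2)" "T3f (q^2) \<noteq> 0"
    using u_sq[OF i2] unfolding qpow_2tau q2 by auto
  have ab1: "qpow (1/4) \<tau> ^ 2 = qpow (1/2) \<tau>" by (simp add: qpow_sq)
  have ab2: "qpow (1/2) \<tau> ^ 2 = q" by (simp add: qpow_sq q_def)
  have "(u_fun \<tau> ^ 2)^2 * ((u_fun (2*\<tau>) ^ 2)^2 + 1) = 2 * u_fun (2*\<tau>) ^ 2"
    by (rule alg_a[OF a1(2) a2(2) a1(1) a2(1) ab1 ab2 theta_I1[OF q] theta_I2[OF q]])
  then show ?thesis by (simp add: Let_def power_mult[symmetric])
qed


definition gP :: "complex \<Rightarrow> nat \<Rightarrow> complex" where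
  "gP q n = (1 + (-1) * q^(n+1)) powi kron8 (n+1)"

lemma kron8_vals:
  "kron8 (8*m+1) = 1" "kron8 (8*m+2) = 0" "kron8 (8*m+3) = -1" "kron8 (8*m+4) = 0"
  "kron8 (8*m+5) = -1" "kron8 (8*m+6) = 0" "kron8 (8*m+7) = 1" "kron8 (8*m+8) = 0"
  unfolding kron8_def by presburger+

lemma gP_block:
  "(\<Prod>i<8*Suc m. gP q i) = (\<Prod>i<8*m. gP q i) *
     ((1 - q^(8*m+1)) / (1 - q^(8*m+3)) / (1 - q^(8*m+5)) * (1 - q^(8*m+7)))"
proof -
  have e: "8 * Suc m = Suc (Suc (Suc (Suc (Suc (Suc (Suc (Suc (8*m))))))))" by simp
  have g: "gP q (8*m) = 1 - q^(8*m+1)" "gP q (Suc (8*m)) = 1"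
          "gP q (Suc (Suc (8*m))) = inverse (1 - q^(8*m+3))" "gP q (Suc (Suc (Suc (8*m)))) = 1"
          "gP q (Suc (Suc (Suc (Suc (8*m))))) = inverse (1 - q^(8*m+5))"
          "gP q (Suc (Suc (Suc (Suc (Suc (8*m)))))) = 1"
          "gP q (Suc (Suc (Suc (Suc (Suc (Suc (8*m))))))) = 1 - q^(8*m+7)"
          "gP q (Suc (Suc (Suc (Suc (Suc (Suc (Suc (8*m)))))))) = 1"
    unfolding gP_def using kron8_vals[of m] by (simp_all add: numeral_eq_Suc)
  show ?thesis unfolding e prod.lessThan_Suc g by (simp add: divide_inverse mult.assoc)
qed

lemma pw8: "(q::complex)^(8*m+r) = q^r * (q^8)^m"
  by (simp add: power_add power_mult)

lemma pw16: "((q::complex)^2)^(8*m+r) = q^(2*r) * (q^16)^m"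
proof -
  have "(q^2)^(8*m+r) = q^(2*(8*m+r))" by (simp only: power_mult)
  also have "2*(8*m+r) = 16*m + 2*r" by simp
  also have "q^(16*m + 2*r) = q^(2*r) * (q^16)^m"
    unfolding power_add power_mult[of q 16 m] by (rule mult.commute)
  finally show ?thesis .
qed

lemma pw_neg4:
  "(-((q::complex)^4))^(2*m) = (q^8)^m"
  "(-((q::complex)^4))^(Suc (2*m)) = - (q^4 * (q^8)^m)"
proof -
  have "(-((q::complex)^4))^(2*m) = ((-(q^4))^2)^m" by (simp add: power_mult)
  also have "(-(q^4))^2 = q^8" by (simp add: power2_eq_square power_add[symmetric])
  finally show "(-((q::complex)^4))^(2*m) = (q^8)^m" .
  then show "(-((q::complex)^4))^(Suc (2*m)) = - (q^4 * (q^8)^m)" by simp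
qed

lemma prod_pair: "(\<Prod>n<2*Suc m. f n) = (\<Prod>n<2*m. f n) * f (2*m) * f (Suc (2*m))"
proof -
  have e: "2 * Suc m = Suc (Suc (2*m))" by simp
  show ?thesis unfolding e prod.lessThan_Suc by (simp add: mult.assoc)
qed

lemma block_P2:
  fixes q X :: complex
  assumes n: "1 - q^3*X \<noteq> 0" "1 + q^3*X \<noteq> 0" "1 - q^5*X \<noteq> 0" "1 + q^5*X \<noteq> 0"
  shows "((1 - q*X) / (1 - q^3*X) / (1 - q^5*X) * (1 - q^7*X))^2 *
           ((1 + q*X) * (1 - q^5*X) * ((1 - q^3*X) * (1 + q^7*X)))
       = ((1 - q^2*X^2) / (1 - q^6*X^2) / (1 - q^10*X^2) * (1 - q^14*X^2)) *
           ((1 - q*X) * (1 + q^5*X) * ((1 + q^3*X) * (1 - q^7*X)))"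
proof -
  have f: "1 - a^2*X^2 = (1 - a*X) * (1 + a*X)" for a :: complex by (simp add: algebra_simps power2_eq_square)
  have "q^2*X^2 = (q*X)^2" "q^6*X^2 = (q^3*X)^2" "q^10*X^2 = (q^5*X)^2" "q^14*X^2 = (q^7*X)^2"
    by (simp_all add: power_mult_distrib power_mult[symmetric])
  then have r: "1 - q^2*X^2 = (1 - q*X) * (1 + q*X)" "1 - q^6*X^2 = (1 - q^3*X) * (1 + q^3*X)"
       "1 - q^10*X^2 = (1 - q^5*X) * (1 + q^5*X)" "1 - q^14*X^2 = (1 - q^7*X) * (1 + q^7*X)"
    using f[of q] f[of "q^3"] f[of "q^5"] f[of "q^7"] by (simp_all add: power_mult_distrib)
  have abs: "B \<noteq> 0 \<Longrightarrow> B' \<noteq> 0 \<Longrightarrow> C \<noteq> 0 \<Longrightarrow> C' \<noteq> 0 \<Longrightarrow>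
     (A / B / C * D)^2 * (A' * C * (B * D')) = ((A * A') / (B * B') / (C * C') * (D * D')) * (A * C' * (B' * D))"
    for A A' B B' C C' D D' :: complex
    by (simp add: field_simps power2_eq_square)
  show ?thesis unfolding r by (rule abs) (use n in auto)
qed

lemma block_P3:
  fixes q W :: complex
  assumes n: "1 - q^6*W \<noteq> 0" "1 - q^10*W \<noteq> 0"
  shows "((1 - q^2*W) / (1 - q^6*W) / (1 - q^10*W) * (1 - q^14*W)) * ((1 - q^6*W) * (1 - q^10*W))
       = (1 - q^2*W) * (1 - q^14*W)"
proof -
  have abs: "a \<noteq> 0 \<Longrightarrow> b \<noteq> 0 \<Longrightarrow> (x / a / b * y) * (a * b) = x * y" for a b x y :: complex
    by (simp add: field_simps)
  show ?thesis by (rule abs) (use n in auto)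
qed


lemma seq_eq_ind:
  fixes L R l r :: "nat \<Rightarrow> complex"
  assumes "L 0 = R 0" "\<And>m. L (Suc m) = L m * l m" "\<And>m. R (Suc m) = R m * r m" "\<And>m. l m = r m"
  shows "L m = R m"
  by (induction m) (use assms in auto)

lemma one_pm_nz:
  fixes w :: complex
  assumes "norm w < 1"
  shows "1 + w \<noteq> 0" "1 - w \<noteq> 0"
proof -
  show "1 + w \<noteq> 0"
  proof
    assume "1 + w = 0" then have "w = -1" using add_eq_0_iff[of 1 w] by simp
    then show False using assms by simp
  qed
  show "1 - w \<noteq> 0" using assms by auto
qed

lemma norm_qkX:
  fixes q :: complex
  assumes q: "norm q < 1" and k: "k > 0"
  shows "norm (q^k * (q^j)^m) < 1"
proof -
  have "norm (q^k * (q^j)^m) = norm q ^ k * (norm q ^ j)^m" by (simp add: norm_mult norm_power)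
  also have "\<dots> \<le> norm q ^ k * 1" using q by (intro mult_left_mono power_le_one) auto
  also have "\<dots> < 1" using q k by (simp add: power_less_one_iff)
  finally show ?thesis .
qed

lemma rearr1: "(G * b)^2 * ((J1 * x) * (J2 * y)) = G^2 * (J1 * J2) * (b^2 * (x * y))" for G b J1 J2 x y :: complex
  by (simp add: power2_eq_square mult_ac)

lemma rearr2: "(G * b) * ((J1 * x) * (J2 * y)) = G * (J1 * J2) * (b * (x * y))" for G b J1 J2 x y :: complex
  by (simp add: mult_ac)

lemma rearr3: "(K1 * x) * (K2 * y) = K1 * K2 * (x * y)" for K1 K2 x y :: complex
  by (simp add: mult_ac)

lemma partial_P2:
  fixes q :: complex
  assumes q: "norm q < 1" "q \<noteq> 0"
  shows "(\<Prod>i<8*m. gP q i)^2 * ((\<Prod>n<2*m. 1 + q * (-(q^4))^n) * (\<Prod>n<2*m. 1 + ((-(q^4))/q) * (-(q^4))^n))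
       = (\<Prod>i<8*m. gP (q^2) i) * ((\<Prod>n<2*m. 1 + (-q) * (-(q^4))^n) * (\<Prod>n<2*m. 1 + ((-(q^4))/(-q)) * (-(q^4))^n))"
proof (rule seq_eq_ind[where m = m])
  fix m
  define X where "X = (q^8)^m"
  have X2: "(q^16)^m = X^2" unfolding X_def by (simp add: power_mult[symmetric] mult.commute)
  have n: "1 - q^3*X \<noteq> 0" "1 + q^3*X \<noteq> 0" "1 - q^5*X \<noteq> 0" "1 + q^5*X \<noteq> 0"
    using one_pm_nz[OF norm_qkX[OF q(1), of 3 8 m]] one_pm_nz[OF norm_qkX[OF q(1), of 5 8 m]]
    unfolding X_def by auto
  have gq: "(\<Prod>i<8*Suc m. gP q i) = (\<Prod>i<8*m. gP q i) *
     ((1 - q*X) / (1 - q^3*X) / (1 - q^5*X) * (1 - q^7*X))"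
    unfolding gP_block pw8 X_def by simp
  have gq2: "(\<Prod>i<8*Suc m. gP (q^2) i) = (\<Prod>i<8*m. gP (q^2) i) *
     ((1 - q^2*X^2) / (1 - q^6*X^2) / (1 - q^10*X^2) * (1 - q^14*X^2))"
    unfolding gP_block pw16 X2 by simp
  have p4: "q * q^4 = q^5" "q^4 * q^3 = q^7" "q^4/q = q^3" "q^4 * (q^4 * X) = q^8 * X"
  proof -
    show "q * q^4 = q^5" by algebra
    show "q^4 * q^3 = q^7" by algebra
    have "q^4 = q^3 * q" by algebra
    then show "q^4/q = q^3" using q by simp
    show "q^4 * (q^4 * X) = q^8 * X" by algebra
  qed
  have r1: "(-(q^4))/q = - (q^3)" using p4(3) by (simp add: minus_divide_left)
  have r2: "(-(q^4))/(-q) = q^3" using p4(3) by simp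
  have a: "(\<Prod>n<2*Suc m. 1 + q * (-(q^4))^n) = (\<Prod>n<2*m. 1 + q * (-(q^4))^n) * ((1 + q*X) * (1 - q^5*X))"
  proof -
    have "1 + q * (-(q^4 * X)) = 1 - q^5*X" by algebra
    then show ?thesis unfolding prod_pair pw_neg4 X_def[symmetric] by (simp add: mult.assoc)
  qed
  have b: "(\<Prod>n<2*Suc m. 1 + ((-(q^4))/q) * (-(q^4))^n) = (\<Prod>n<2*m. 1 + ((-(q^4))/q) * (-(q^4))^n) * ((1 - q^3*X) * (1 + q^7*X))"
  proof -
    have "1 + (- (q^3)) * (-(q^4 * X)) = 1 + q^7*X" by algebra
    then show ?thesis unfolding prod_pair pw_neg4 X_def[symmetric] r1 by (simp add: mult.assoc)
  qed
  have c: "(\<Prod>n<2*Suc m. 1 + (-q) * (-(q^4))^n) = (\<Prod>n<2*m. 1 + (-q) * (-(q^4))^n) * ((1 - q*X) * (1 + q^5*X))"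
  proof -
    have "1 + (-q) * (-(q^4 * X)) = 1 + q^5*X" by algebra
    then show ?thesis unfolding prod_pair pw_neg4 X_def[symmetric] by (simp add: mult.assoc)
  qed
  have d: "(\<Prod>n<2*Suc m. 1 + ((-(q^4))/(-q)) * (-(q^4))^n) = (\<Prod>n<2*m. 1 + ((-(q^4))/(-q)) * (-(q^4))^n) * ((1 + q^3*X) * (1 - q^7*X))"
  proof -
    have "1 + q^3 * (-(q^4 * X)) = 1 - q^7*X" by algebra
    then show ?thesis unfolding prod_pair pw_neg4 X_def[symmetric] r2 by (simp add: mult.assoc)
  qed
  show "(\<Prod>i<8*Suc m. gP q i)^2 * ((\<Prod>n<2*Suc m. 1 + q * (-(q^4))^n) * (\<Prod>n<2*Suc m. 1 + ((-(q^4))/q) * (-(q^4))^n))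
      = (\<Prod>i<8*m. gP q i)^2 * ((\<Prod>n<2*m. 1 + q * (-(q^4))^n) * (\<Prod>n<2*m. 1 + ((-(q^4))/q) * (-(q^4))^n))
        * (((1 - q*X) / (1 - q^3*X) / (1 - q^5*X) * (1 - q^7*X))^2 *
           ((1 + q*X) * (1 - q^5*X) * ((1 - q^3*X) * (1 + q^7*X))))"
    unfolding gq a b by (rule rearr1)
  show "(\<Prod>i<8*Suc m. gP (q^2) i) * ((\<Prod>n<2*Suc m. 1 + (-q) * (-(q^4))^n) * (\<Prod>n<2*Suc m. 1 + ((-(q^4))/(-q)) * (-(q^4))^n))
      = (\<Prod>i<8*m. gP (q^2) i) * ((\<Prod>n<2*m. 1 + (-q) * (-(q^4))^n) * (\<Prod>n<2*m. 1 + ((-(q^4))/(-q)) * (-(q^4))^n))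
        * (((1 - q^2*X^2) / (1 - q^6*X^2) / (1 - q^10*X^2) * (1 - q^14*X^2)) *
           ((1 - q*X) * (1 + q^5*X) * ((1 + q^3*X) * (1 - q^7*X))))"
    unfolding gq2 c d by (rule rearr2)
  show "((1 - q*X) / (1 - q^3*X) / (1 - q^5*X) * (1 - q^7*X))^2 *
           ((1 + q*X) * (1 - q^5*X) * ((1 - q^3*X) * (1 + q^7*X)))
      = ((1 - q^2*X^2) / (1 - q^6*X^2) / (1 - q^10*X^2) * (1 - q^14*X^2)) *
           ((1 - q*X) * (1 + q^5*X) * ((1 + q^3*X) * (1 - q^7*X)))"
    by (rule block_P2[OF n])
qed simp

lemma partial_P3:
  fixes q :: complex
  assumes q: "norm q < 1" "q \<noteq> 0"
  shows "(\<Prod>i<8*m. gP (q^2) i) * ((\<Prod>n<m. 1 + (-(q^6)) * (q^16)^n) * (\<Prod>n<m. 1 + ((q^16)/(-(q^6))) * (q^16)^n))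
       = (\<Prod>n<m. 1 + (-(q^2)) * (q^16)^n) * (\<Prod>n<m. 1 + ((q^16)/(-(q^2))) * (q^16)^n)"
proof (rule seq_eq_ind[where m = m])
  fix m
  define W where "W = (q^16)^m"
  have n: "1 - q^6*W \<noteq> 0" "1 - q^10*W \<noteq> 0"
    using one_pm_nz[OF norm_qkX[OF q(1), of 6 16 m]] one_pm_nz[OF norm_qkX[OF q(1), of 10 16 m]]
    unfolding W_def by auto
  have gq2: "(\<Prod>i<8*Suc m. gP (q^2) i) = (\<Prod>i<8*m. gP (q^2) i) *
     ((1 - q^2*W) / (1 - q^6*W) / (1 - q^10*W) * (1 - q^14*W))"
    unfolding gP_block pw16 W_def by simp
  have r1: "(q^16)/(-(q^6)) = - (q^10)"
  proof -
    have "q^16/q^6 = q^(16-6)" by (rule power_diff[symmetric]) (use q in auto)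
    then show ?thesis by (simp add: minus_divide_right)
  qed
  have r2: "(q^16)/(-(q^2)) = - (q^14)"
  proof -
    have "q^16/q^2 = q^(16-2)" by (rule power_diff[symmetric]) (use q in auto)
    then show ?thesis by (simp add: minus_divide_right)
  qed
  show "(\<Prod>i<8*Suc m. gP (q^2) i) * ((\<Prod>n<Suc m. 1 + (-(q^6)) * (q^16)^n) * (\<Prod>n<Suc m. 1 + ((q^16)/(-(q^6))) * (q^16)^n))
      = (\<Prod>i<8*m. gP (q^2) i) * ((\<Prod>n<m. 1 + (-(q^6)) * (q^16)^n) * (\<Prod>n<m. 1 + ((q^16)/(-(q^6))) * (q^16)^n))
        * (((1 - q^2*W) / (1 - q^6*W) / (1 - q^10*W) * (1 - q^14*W)) * ((1 - q^6*W) * (1 - q^10*W)))"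
  proof -
    have f: "1 + (-(q^6)) * W = 1 - q^6*W" "1 + (-(q^10)) * W = 1 - q^10*W" by simp_all
    show ?thesis unfolding gq2 prod.lessThan_Suc r1 W_def[symmetric] f by (rule rearr2)
  qed
  show "(\<Prod>n<Suc m. 1 + (-(q^2)) * (q^16)^n) * (\<Prod>n<Suc m. 1 + ((q^16)/(-(q^2))) * (q^16)^n)
      = (\<Prod>n<m. 1 + (-(q^2)) * (q^16)^n) * (\<Prod>n<m. 1 + ((q^16)/(-(q^2))) * (q^16)^n) * ((1 - q^2*W) * (1 - q^14*W))"
  proof -
    have f: "1 + (-(q^2)) * W = 1 - q^2*W" "1 + (-(q^14)) * W = 1 - q^14*W" by simp_all
    show ?thesis unfolding prod.lessThan_Suc r2 W_def[symmetric] f by (rule rearr3)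
  qed
  show "((1 - q^2*W) / (1 - q^6*W) / (1 - q^10*W) * (1 - q^14*W)) * ((1 - q^6*W) * (1 - q^10*W))
      = (1 - q^2*W) * (1 - q^14*W)"
    by (rule block_P3[OF n])
qed simp

lemma gP_conv: "norm q < 1 \<Longrightarrow> convergent_prod (gP q)"
  unfolding gP_def by (rule conv_prod_powi) (auto simp: kron8_def)

lemma prod_id_P2:
  fixes q :: complex
  assumes q: "norm q < 1" "q \<noteq> 0"
  shows "prodinf (gP q) ^ 2 * Jp q (-(q^4)) = prodinf (gP (q^2)) * Jp (-q) (-(q^4))"
proof -
  have Q: "norm (-(q^4)) < 1" using q by (simp add: norm_power power_less_one_iff)
  have q2: "norm (q^2) < 1" using q by (simp add: norm_power power_less_one_iff)
  have L: "(\<lambda>m. (\<Prod>i<8*m. gP q i)^2 * ((\<Prod>n<2*m. 1 + q * (-(q^4))^n) * (\<Prod>n<2*m. 1 + ((-(q^4))/q) * (-(q^4))^n)))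
     \<longlonglongrightarrow> prodinf (gP q) ^ 2 * Jp q (-(q^4))"
    unfolding Jp_def
    by (intro tendsto_mult tendsto_power prod_lim_mult gP_conv conv_prod_geom q(1) Q) auto
  have R: "(\<lambda>m. (\<Prod>i<8*m. gP (q^2) i) * ((\<Prod>n<2*m. 1 + (-q) * (-(q^4))^n) * (\<Prod>n<2*m. 1 + ((-(q^4))/(-q)) * (-(q^4))^n)))
     \<longlonglongrightarrow> prodinf (gP (q^2)) * Jp (-q) (-(q^4))"
    unfolding Jp_def
    by (intro tendsto_mult tendsto_power prod_lim_mult gP_conv conv_prod_geom q2 Q) auto
  show ?thesis using LIMSEQ_unique[OF L R[folded partial_P2[OF q]]] .
qed

lemma prod_id_P3:
  fixes q :: complex
  assumes q: "norm q < 1" "q \<noteq> 0"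
  shows "prodinf (gP (q^2)) * Jp (-(q^6)) (q^16) = Jp (-(q^2)) (q^16)"
proof -
  have Q: "norm (q^16) < 1" using q by (simp add: norm_power power_less_one_iff)
  have q2: "norm (q^2) < 1" using q by (simp add: norm_power power_less_one_iff)
  have L: "(\<lambda>m. (\<Prod>i<8*m. gP (q^2) i) * ((\<Prod>n<m. 1 + (-(q^6)) * (q^16)^n) * (\<Prod>n<m. 1 + ((q^16)/(-(q^6))) * (q^16)^n)))
     \<longlonglongrightarrow> prodinf (gP (q^2)) * Jp (-(q^6)) (q^16)"
    unfolding Jp_def
    by (intro tendsto_mult prod_lim_mult prod_lim gP_conv conv_prod_geom q2 Q) auto
  have R: "(\<lambda>m. (\<Prod>n<m. 1 + (-(q^2)) * (q^16)^n) * (\<Prod>n<m. 1 + ((q^16)/(-(q^2))) * (q^16)^n))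
     \<longlonglongrightarrow> Jp (-(q^2)) (q^16)"
    unfolding Jp_def
    by (intro tendsto_mult prod_lim conv_prod_geom Q)
  show ?thesis using LIMSEQ_unique[OF L R[folded partial_P3[OF q]]] .
qed


lemma term_gen:
  fixes p s t :: complex
  assumes "p \<noteq> 0"
  shows "(s * p powi a) powi n * (t * p powi (2*b)) ^ tri n = (s powi n * t ^ tri n) * p powi (a*n + b*(n*(n-1)))"
proof -
  have "(s * p powi a) powi n * (t * p powi (2*b)) ^ tri n
      = (s powi n * t ^ tri n) * ((p powi a) powi n * (p powi (2*b)) ^ tri n)"
    by (simp add: power_int_mult_distrib power_mult_distrib mult_ac)
  also have "(p powi a) powi n * (p powi (2*b)) ^ tri n = p powi (a*n + b*(n*(n-1)))"
    by (rule term_pow[OF assms])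
  finally show ?thesis .
qed

lemma m1_powi: "(-1::complex) powi m = (if even m then 1 else -1)"
proof (cases "m \<ge> 0")
  case True
  then have "(-1::complex) powi m = (-1) ^ nat m" by (simp add: power_int_def)
  also have "\<dots> = (if even (nat m) then 1 else -1)" by (simp add: minus_one_power_iff)
  finally show ?thesis using True by (simp add: even_nat_iff)
next
  case False
  then have "(-1::complex) powi m = (-1) ^ nat (-m)" by (simp add: power_int_def)
  also have "\<dots> = (if even (nat (-m)) then 1 else -1)" by (simp add: minus_one_power_iff)
  finally show ?thesis using False by (simp add: even_nat_iff)
qed

lemma sign_tri2: "(-1::complex) ^ tri (2*k) = (-1) powi k"
proof -
  have nn: "k*(2*k-1) \<ge> 0"
    by (cases "k \<ge> 1") (auto simp: mult_nonpos_nonpos zero_le_mult_iff)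
  have t: "tri (2*k) = nat (k*(2*k-1))"
    unfolding tri_def by (simp add: algebra_simps)
  have "(-1::complex) ^ tri (2*k) = (if even (nat (k*(2*k-1))) then 1 else -1)"
    unfolding t by (simp add: minus_one_power_iff)
  also have "even (nat (k*(2*k-1))) \<longleftrightarrow> even (k*(2*k-1))" using nn by (simp add: even_nat_iff)
  also have "even (k*(2*k-1)) \<longleftrightarrow> even k" by auto
  finally show ?thesis by (simp add: m1_powi)
qed

lemma eps_powi:
  fixes e :: complex
  assumes "e = 1 \<or> e = -1"
  shows "e powi (2*k) = 1" "e powi (1 - 2*k) = e"
proof -
  have e2: "e^2 = 1" using assms by auto
  have e0: "e \<noteq> 0" using assms by auto
  show a: "e powi (2*k) = 1"
    using e2 by (simp add: power_int_mult power_int_power[symmetric, of e 2 k])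
  have "e powi (1 - 2*k) = e powi 1 / e powi (2*k)" using e0 by (simp add: power_int_diff)
  then show "e powi (1 - 2*k) = e" using a by simp
qed

lemma has_sum_Sth:
  fixes z Q :: complex
  assumes "norm Q < 1" "z \<noteq> 0"
  shows "((\<lambda>n. z powi n * Q ^ tri n) has_sum Sth z Q) UNIV"
  unfolding Sth_def using Sth_summable[OF assms] by (rule has_sum_infsum)

lemma sum_id_b:
  fixes q e :: complex
  assumes q: "norm q < 1" "q \<noteq> 0" and e: "e = 1 \<or> e = -1"
  shows "Sth (e * q) (-(q^4)) = Sth (-(q^6)) (q^16) + e * q * Sth (-(q^2)) (q^16)"
proof -
  have Q16: "norm (q^16) < 1" using q by (simp add: norm_power power_less_one_iff)
  have Q4: "norm (-(q^4)) < 1" using q by (simp add: norm_power power_less_one_iff)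
  have e0: "e \<noteq> 0" using e by auto
  define f where "f = (\<lambda>n. (e*q) powi n * (-(q^4)) ^ tri n)"
  have fgen: "f n = (e powi n * (-1) ^ tri n) * q powi (1*n + 2*(n*(n-1)))" for n
    unfolding f_def using term_gen[OF q(2), of e 1 n "-1" 2] by simp
  have Bgen: "(-(q^6)) powi k * (q^16) ^ tri k = (-1) powi k * q powi (6*k + 8*(k*(k-1)))" for k
    using term_gen[OF q(2), of "-1" 6 k 1 8] by simp
  have Agen: "(-(q^2)) powi k * (q^16) ^ tri k = (-1) powi k * q powi (2*k + 8*(k*(k-1)))" for k
    using term_gen[OF q(2), of "-1" 2 k 1 8] by simp
  have fE: "f (2*k) = (-(q^6)) powi k * (q^16) ^ tri k" for k
  proof -
    have "f (2*k) = (e powi (2*k) * (-1) ^ tri (2*k)) * q powi (1*(2*k) + 2*((2*k)*(2*k-1)))" by (rule fgen)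
    also have "\<dots> = (-1) powi k * q powi (6*k + 8*(k*(k-1)))"
      unfolding eps_powi(1)[OF e] sign_tri2 by (simp add: algebra_simps)
    finally show ?thesis unfolding Bgen .
  qed
  have fO: "f (1 - 2*k) = e * q * ((-(q^2)) powi k * (q^16) ^ tri k)" for k
  proof -
    have "f (1 - 2*k) = (e powi (1 - 2*k) * (-1) ^ tri (1 - 2*k)) * q powi (1*(1-2*k) + 2*((1-2*k)*(1-2*k-1)))"
      by (rule fgen)
    also have "tri (1 - 2*k) = tri (2*k)" by (rule tri_1_minus)
    also have "q powi (1*(1-2*k) + 2*((1-2*k)*(1-2*k-1))) = q powi 1 * q powi (2*k + 8*(k*(k-1)))"
      by (rule powi_split[OF q(2)]) (simp add: algebra_simps)
    finally show ?thesis unfolding eps_powi(2)[OF e] sign_tri2 Agen by (simp add: mult_ac)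
  qed
  have bE: "bij_betw (\<lambda>k::int. 2*k) UNIV {n. even n}"
    by (rule bij_betwI[where g = "\<lambda>n. n div 2"]) auto
  have bO: "bij_betw (\<lambda>k::int. 1 - 2*k) UNIV {n. odd n}"
    by (rule bij_betwI[where g = "\<lambda>n. (1 - n) div 2"]) (auto simp: Pi_def elim!: oddE)
  have hE: "(f has_sum Sth (-(q^6)) (q^16)) {n. even n}"
  proof -
    have "((\<lambda>k. f (2*k)) has_sum Sth (-(q^6)) (q^16)) UNIV"
      unfolding fE by (rule has_sum_Sth[OF Q16]) (use q in simp)
    then show ?thesis using has_sum_reindex_bij_betw[OF bE, of f] by simp
  qed
  have hO: "(f has_sum (e * q * Sth (-(q^2)) (q^16))) {n. odd n}"
  proof -
    have "((\<lambda>k. f (1 - 2*k)) has_sum (e * q * Sth (-(q^2)) (q^16))) UNIV"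
      unfolding fO by (rule has_sum_cmult_right, rule has_sum_Sth[OF Q16]) (use q in simp)
    then show ?thesis using has_sum_reindex_bij_betw[OF bO, of f] by simp
  qed
  have "(f has_sum (Sth (-(q^6)) (q^16) + e * q * Sth (-(q^2)) (q^16))) ({n. even n} \<union> {n. odd n})"
    by (rule has_sum_Un_disjoint[OF hE hO]) auto
  moreover have "{n::int. even n} \<union> {n. odd n} = UNIV" by auto
  ultimately have "(f has_sum (Sth (-(q^6)) (q^16) + e * q * Sth (-(q^2)) (q^16))) UNIV" by simp
  then show ?thesis unfolding Sth_def f_def by (rule infsumI)
qed


lemma Jp_nz:
  fixes z Q :: complex
  assumes Q: "norm Q < 1" and z: "norm z < 1" and zQ: "norm (Q / z) < 1"
  shows "Jp z Q \<noteq> 0"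
proof -
  have a: "1 + c * Q^n \<noteq> 0" if c: "norm c < 1" for c n
  proof -
    have "norm (c * Q^n) \<le> norm c * 1"
      unfolding norm_mult norm_power using Q by (intro mult_left_mono power_le_one) auto
    then have "norm (c * Q^n) < 1" using c by simp
    then show ?thesis by (rule one_pm_nz(1))
  qed
  show ?thesis unfolding Jp_def
    using prod_geom_nonzero[OF Q a[OF z]] prod_geom_nonzero[OF Q a[OF zQ]] by simp
qed

lemma norm_quot_pow:
  fixes q :: complex
  assumes q: "norm q < 1" "q \<noteq> 0" and ab: "a < b"
  shows "norm (q^b / q^a) < 1"
proof -
  have "norm q ^ b < norm q ^ a" using q ab by (intro power_strict_decreasing) auto
  moreover have "0 < norm q ^ a" using q by simp
  ultimately show ?thesis by (simp add: norm_divide norm_power divide_less_eq)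
qed

lemma part_b:
  fixes \<tau> :: complex
  assumes "Im \<tau> > 0"
  shows "let x = v_fun \<tau>; y = v_fun (2 * \<tau>) in x ^ 2 * y + x ^ 2 + y ^ 2 = y"
proof -
  define q where "q = qpow 1 \<tau>"
  have q: "norm q < 1" "q \<noteq> 0" unfolding q_def using assms by (auto simp: qpow_norm qpow_nz)
  have nq: "0 < norm q" using q by simp
  define P where "P = prodinf (gP q)"
  define P2 where "P2 = prodinf (gP (q^2))"
  define x where "x = v_fun \<tau>"
  define y where "y = v_fun (2 * \<tau>)"
  have x: "x = qpow (1/2) \<tau> * P"
    unfolding x_def v_fun_def P_def gP_def q_def by simp
  have q2: "qpow (2*1) \<tau> = q^2" unfolding q_def qpow_sq by simp
  have y: "y = q * P2"
  proof -
    have "y = qpow (2*(1/2)) \<tau> * (\<Prod>n. (1 - qpow (2*1) \<tau> ^ (n+1)) powi kron8 (n+1))"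
      unfolding y_def v_fun_def qpow_2tau ..
    also have "qpow (2*(1/2)) \<tau> = q" unfolding q_def by simp
    finally show ?thesis unfolding q2 P2_def gP_def by simp
  qed
  have x2: "x^2 = q * P^2"
    unfolding x by (simp add: power_mult_distrib qpow_sq q_def)
  have Q16: "norm (q^16) < 1" "q^16 \<noteq> 0" using q by (auto simp: norm_power power_less_one_iff)
  have Q4: "norm (-(q^4)) < 1" "-(q^4) \<noteq> 0" using q by (auto simp: norm_power power_less_one_iff)
  obtain c1 where c10: "c1 \<noteq> 0" and c1: "\<And>z. norm (q^16) ^ 2 < norm z \<and> norm z < 1 / norm (q^16) \<Longrightarrow> Sth z (q^16) = c1 * Jp z (q^16)"
    using jtp[OF Q16] by blast
  obtain c2 where c20: "c2 \<noteq> 0" and c2: "\<And>z. norm (-(q^4)) ^ 2 < norm z \<and> norm z < 1 / norm (-(q^4)) \<Longrightarrow> Sth z (-(q^4)) = c2 * Jp z (-(q^4))"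
    using jtp[OF Q4] by blast
  define JA where "JA = Jp (-(q^2)) (q^16)"
  define JB where "JB = Jp (-(q^6)) (q^16)"
  define Jq where "Jq = Jp q (-(q^4))"
  define Jm where "Jm = Jp (-q) (-(q^4))"
  define A where "A = Sth (-(q^2)) (q^16)"
  define B where "B = Sth (-(q^6)) (q^16)"
  have A: "A = c1 * JA" unfolding A_def JA_def using c1[of "-(q^2)"] U_mem[OF q, of 2 16] by simp
  have B: "B = c1 * JB" unfolding B_def JB_def using c1[of "-(q^6)"] U_mem[OF q, of 6 16] by simp
  have Sq: "c2 * Jq = B + q * A"
    unfolding Jq_def A_def B_def using c2[of q] U_mem[OF q, of 1 4] sum_id_b[OF q, of 1] by simp
  have Sm: "c2 * Jm = B - q * A"
    unfolding Jm_def A_def B_def using c2[of "-q"] U_mem[OF q, of 1 4] sum_id_b[OF q, of "-1"] by simp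
  have P3: "P2 * JB = JA" unfolding P2_def JB_def JA_def by (rule prod_id_P3[OF q])
  have P2id: "P^2 * Jq = P2 * Jm" unfolding P_def P2_def Jq_def Jm_def by (rule prod_id_P2[OF q])
  have JBnz: "JB \<noteq> 0"
    unfolding JB_def
  proof (rule Jp_nz[OF Q16(1)])
    show "norm (-(q^6)) < 1" using q by (simp add: norm_power power_less_one_iff)
    have "norm (q^16 / -(q^6)) = norm (q^16 / q^6)" by (simp add: norm_divide)
    also have "\<dots> < 1" by (rule norm_quot_pow[OF q]) simp
    finally show "norm (q^16 / -(q^6)) < 1" .
  qed
  have Jqnz: "Jq \<noteq> 0"
    unfolding Jq_def
  proof (rule Jp_nz[OF Q4(1) q(1)])
    have "norm (-(q^4) / q) = norm (q^4 / q^1)" by (simp add: norm_divide)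
    also have "\<dots> < 1" by (rule norm_quot_pow[OF q]) simp
    finally show "norm (-(q^4) / q) < 1" .
  qed
  have Bnz: "B \<noteq> 0" using B c10 JBnz by simp
  have yB: "y * B = q * A" unfolding y B A using P3[symmetric] by (simp add: mult_ac)
  have key: "(1 - y) * Jq = (1 + y) * Jm"
  proof -
    have "(1 - y) * (B + q * A) * B = (B - q * A) * (B + q * A)"
      using yB by (simp add: algebra_simps)
    also have "\<dots> = (1 + y) * (B - q * A) * B"
      using yB by (simp add: algebra_simps)
    finally have "(1 - y) * (B + q * A) = (1 + y) * (B - q * A)" using Bnz by simp
    then have "c2 * ((1 - y) * Jq) = c2 * ((1 + y) * Jm)" unfolding Sq[symmetric] Sm[symmetric] by (simp add: mult_ac)
    then show ?thesis using c20 by simp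
  qed
  have x2J: "x^2 * Jq = y * Jm" unfolding x2 y using P2id by (simp add: mult_ac)
  have "x^2 * (1 + y) * Jq = y * (1 - y) * Jq"
  proof -
    have "x^2 * (1 + y) * Jq = (1 + y) * (x^2 * Jq)" by (simp add: mult_ac)
    also have "\<dots> = y * ((1 + y) * Jm)" unfolding x2J by (simp add: mult_ac)
    also have "\<dots> = y * ((1 - y) * Jq)" unfolding key ..
    finally show ?thesis by (simp add: mult_ac)
  qed
  then have "x^2 * (1 + y) = y * (1 - y)" using Jqnz by simp
  then have "x ^ 2 * y + x ^ 2 + y ^ 2 = y" by (simp add: algebra_simps power2_eq_square)
  then show ?thesis unfolding x_def y_def Let_def .
qed

theorem proposition1:
  fixes \<tau> :: complex
  assumes "Im \<tau> > 0"
  shows "(let x = u_fun \<tau>; y = u_fun (2 * \<tau>) in x ^ 4 * (y ^ 4 + 1) = 2 * y ^ 2)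
       \<and> (let x = v_fun \<tau>; y = v_fun (2 * \<tau>) in x ^ 2 * y + x ^ 2 + y ^ 2 = y)"
  using part_a[OF assms] part_b[OF assms] by blast

end
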